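(* Consider the algorithm described in the context, suppose it does not terminate finitely, and suppose there is $\sigma_{\min}>0$ with $\sigma_{\min}(J_k)\ge\sigma_{\min}$ for all $k\in\mathbb{N}$. Then any limit point $x_*$ of the sequence $\{x_k\}$ is a first-order KKT point of the problem, i.e., $c(x_* )=0$ and there exist $y_*\in\mathbb{R}^m$ and $g_{r,*}\in\partial r(x_* )$ such that $\nabla f(x_* )+g_{r,*}-J(x_* )^Ty_*=0$.
   Context: Problem: $\min_{x\in\mathbb{R}^n} f(x)+r(x)$ subject to $c(x)=0$, where $f:\mathbb{R}^n\to\mathbb{R}$ and $c:\mathbb{R}^n\to\mathbb{R}^m$ ($m\le n$) are continuously differentiable and $r:\mathbb{R}^n\to\mathbb{R}_{\ge 0}$ is convex. Write $g(x)=\nabla f(x)$, $J(x)=\nabla c(x)^T$, and $f_k=f(x_k)$, $g_k=g(x_k)$, $c_k=c(x_k)$, $J_k=J(x_k)$, $r_k=r(x_k)$. All norms are Euclidean. Merit function: $\Phi_\tau(x)=\tau(f(x)+r(x))+\|c(x)\|_2$. Algorithm: inputs $x_0$, $\alpha_0>0$, $\tau_{-1}>0$; constants $\kappa_v>0$, $\sigma_c,\epsilon_\tau,\xi,\eta\in(0,1)$, $\sigma_u\in(0,1/2]$, $\bar\sigma_u:=\sigma_u+\tfrac12$. For $k=0,1,\dots$: 1. If $J_k^Tc_k\ne0$, compute $v_k$ with $v_k\in\mathrm{Range}(J_k^T)$, $\|v_k\|_2\le\kappa_v\alpha_k\|J_k^Tc_k\|_2$, $\|c_k+J_kv_k\|_2\le\|c_k+J_kv_k^c\|_2$,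 where $v_k^c=-\beta_k^cJ_k^Tc_k$ with $\beta_k^c$ minimizing $\tfrac12\|c_k-\beta J_kJ_k^Tc_k\|_2^2$ over $0\le\beta\le\kappa_v\alpha_k$. Otherwise set $v_k=0$, and if $c_k\ne0$ terminate. 2. Let $u_k$ be the unique minimizer of $g_k^Tu+\tfrac1{2\alpha_k}\|u\|_2^2+r(x_k+v_k+u)$ subject to $J_ku=0$; set $s_k=v_k+u_k$. If $s_k=0$, terminate. 3. Let $D_k:=g_k^Ts_k+\bar\sigma_u\|s_k\|_2^2/\alpha_k+r(x_k+s_k)-r_k$; $\tau_{k,\mathrm{trial}}=\infty$ if $D_k\le0$, else $\tau_{k,\mathrm{trial}}=(1-\sigma_c)(\|c_k\|_2-\|c_k+J_kv_k\|_2)/D_k$. Set $\tau_k=\tau_{k-1}$ if $\tau_{k-1}\le\tau_{k,\mathrm{trial}}$, else $\tau_k=\min\{(1-\epsilon_\tau)\tau_{k-1},\tau_{k,\mathrm{trial}}\}$. 4. With $\Delta q_k(s,\tau):=-\tau(g_k^Ts+\tfrac1{2\alpha_k}\|s\|_2^2+r(x_k+s)-r_k)+\|c_k\|_2-\|c_k+J_ks\|_2$: if $\Phi_{\tau_k}(x_k+s_k)\le\Phi_{\tau_k}(x_k)-\eta\Delta q_k(s_k,\tau_k)$ set $x_{k+1}=x_k+s_k$, $\alpha_{k+1}=\alpha_k$; else $x_{k+1}=x_k$, $\alpha_{k+1}=\xi\alpha_k$. Assumption: there is an open convex set $\mathcal X$ containing all iterates $x_k$ and trial points $x_k+s_k$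 such that $f$ is bounded below on $\mathcal X$, $\nabla f$ is bounded and Lipschitz continuous on $\mathcal X$, $c$ is bounded on $\mathcal X$, $J$ is bounded and Lipschitz continuous on $\mathcal X$, and all subgradients of $r$ at points of $\mathcal X$ are uniformly bounded in norm. *)

theory Defs
  imports "HOL-Analysis.Analysis"
begin

definition subdiff :: "(real^'n \<Rightarrow> real) \<Rightarrow> real^'n \<Rightarrow> (real^'n) set" where
  "subdiff r x = {gr. \<forall>y. r y \<ge> r x + gr \<bullet> (y - x)}"

(* Smallest singular value of an m x n matrix J with m <= n:
   sigma_min(J) = min over unit y in R^m of ||J^T y||  (= sqrt of the smallest
   eigenvalue of J J^T, i.e. the m-th largest singular value). *)
definition sigma_min_sv :: "real^'n^'m \<Rightarrow> real" where
  "sigma_min_sv J = Inf {norm (transpose J *v y) | y. norm y = 1}"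

definition merit :: "(real^'n \<Rightarrow> real) \<Rightarrow> (real^'n \<Rightarrow> real) \<Rightarrow> (real^'n \<Rightarrow> real^'m)
                     \<Rightarrow> real \<Rightarrow> real^'n \<Rightarrow> real" where
  "merit f r c \<tau> x = \<tau> * (f x + r x) + norm (c x)"

definition dq :: "(real^'n \<Rightarrow> real) \<Rightarrow> (real^'n \<Rightarrow> real^'m) \<Rightarrow> real^'n \<Rightarrow> real^'n
                  \<Rightarrow> real^'n^'m \<Rightarrow> real \<Rightarrow> real^'n \<Rightarrow> real \<Rightarrow> real" where
  "dq r c xk gk Jk ak s \<tau> =
     - \<tau> * (gk \<bullet> s + norm s ^ 2 / (2 * ak) + r (xk + s) - r xk)
     + norm (c xk) - norm (c xk + Jk *v s)"

end

theory Submission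
  imports Defs
begin

lemma mat_entry_le:
  fixes A :: "real^'n^'m"
  shows "\<bar>A$i$j\<bar> \<le> norm A"
proof -
  have "\<bar>A$i$j\<bar> \<le> norm (A$i)" by (rule component_le_norm_cart)
  also have "\<dots> \<le> norm A" by (rule Finite_Cartesian_Product.norm_nth_le)
  finally show ?thesis .
qed

lemma matvec_bound:
  fixes A :: "real^'n^'m"
  shows "norm (A *v x) \<le> real CARD('m) * real CARD('n) * norm A * norm x"
proof -
  have "onorm ((*v) A) \<le> real CARD('m) * real CARD('n) * norm A"
    by (rule onorm_le_matrix_component) (rule mat_entry_le)
  moreover have "norm (A *v x) \<le> onorm ((*v) A) * norm x"
    by (rule onorm[OF matrix_vector_mul_bounded_linear])
  ultimately show ?thesis
    using mult_right_mono[OF _ norm_ge_zero] order_trans by blast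
qed

lemma matvec_boundT:
  fixes A :: "real^'n^'m"
  shows "norm (transpose A *v y) \<le> real CARD('m) * real CARD('n) * norm A * norm y"
proof -
  have "\<And>i j. \<bar>transpose A$i$j\<bar> \<le> norm A"
    unfolding transpose_def by (simp add: mat_entry_le)
  then have "onorm ((*v) (transpose A)) \<le> real CARD('n) * real CARD('m) * norm A"
    by (rule onorm_le_matrix_component)
  moreover have "norm (transpose A *v y) \<le> onorm ((*v) (transpose A)) * norm y"
    by (rule onorm[OF matrix_vector_mul_bounded_linear])
  ultimately have "norm (transpose A *v y) \<le> real CARD('n) * real CARD('m) * norm A * norm y"
    using mult_right_mono[OF _ norm_ge_zero] order_trans by blast
  then show ?thesis by (simp add: mult.commute mult.left_commute)
qed

lemma transpose_inner:
  fixes A :: "real^'n^'m"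
  shows "(transpose A *v y) \<bullet> x = y \<bullet> (A *v x)"
  by (simp add: dot_lmul_matrix)

lemma perp_null_range:
  fixes A :: "real^'n^'m"
  assumes "\<And>w. A *v w = 0 \<Longrightarrow> p \<bullet> w = 0"
  shows "\<exists>y. p = transpose A *v y"
proof -
  let ?S = "range (\<lambda>y. transpose A *v y)"
  have sub: "subspace ?S"
    by (rule linear_subspace_image[OF matrix_vector_mul_linear subspace_UNIV])
  obtain a b where a: "a \<in> span ?S" and b: "\<And>w. w \<in> span ?S \<Longrightarrow> orthogonal b w" and ab: "p = a + b"
    by (rule orthogonal_subspace_decomp_exists[of ?S p]) auto
  have aS: "a \<in> ?S" using a span_eq_iff[THEN iffD2, OF sub] by blast
  have "orthogonal b (transpose A *v (A *v b))" using b by (simp add: span_base)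
  then have "(A *v b) \<bullet> (A *v b) = 0"
    unfolding orthogonal_def using transpose_inner[of A "A *v b" b] by (simp add: inner_commute)
  then have Ab: "A *v b = 0" by simp
  have "orthogonal b a" using b a by blast
  then have "b \<bullet> a = 0" by (simp add: orthogonal_def)
  moreover have "p \<bullet> b = 0" using assms Ab by blast
  ultimately have "b \<bullet> b = 0" using ab by (simp add: inner_add_left inner_add_right inner_commute)
  then have "b = 0" by simp
  then show ?thesis using aS ab by auto
qed

lemma sep_kkt:
  fixes \<phi> :: "real^'n \<Rightarrow> real" and A :: "real^'n^'m"
  assumes cvx: "convex_on UNIV \<phi>"
    and opt: "\<And>w. A *v w = 0 \<Longrightarrow> \<phi> 0 \<le> \<phi> w"
  shows "\<exists>y. \<forall>w. \<phi> w \<ge> \<phi> 0 + (transpose A *v y) \<bullet> w"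
proof -
  define S where "S = {z :: (real^'n) \<times> real. snd z > \<phi> (fst z) - \<phi> 0}"
  define T where "T = {z :: (real^'n) \<times> real. A *v fst z = 0 \<and> snd z = 0}"
  have cS: "convex S"
    unfolding convex_def
  proof (intro ballI allI impI)
    fix x y :: "(real^'n) \<times> real" and u v :: real
    assume x: "x \<in> S" and y: "y \<in> S" and u: "0 \<le> u" and v: "0 \<le> v" and uv: "u + v = 1"
    have c1: "\<phi> (u *\<^sub>R fst x + v *\<^sub>R fst y) \<le> u * \<phi> (fst x) + v * \<phi> (fst y)"
    proof -
      have uu: "u = 1 - v" and v1: "v \<le> 1" using uv u by simp_all
      show ?thesis unfolding uu using convex_onD[OF cvx, of v "fst x" "fst y"] v v1 by simp
    qed
    have "u * (snd x - (\<phi> (fst x) - \<phi> 0)) + v * (snd y - (\<phi> (fst y) - \<phi> 0)) > 0"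
    proof (cases "u = 0")
      case True then have "v = 1" using uv by simp
      then show ?thesis using True y by (simp add: S_def)
    next
      case False then have "u > 0" using u by simp
      moreover have "snd x - (\<phi> (fst x) - \<phi> 0) > 0" using x by (simp add: S_def)
      moreover have "v * (snd y - (\<phi> (fst y) - \<phi> 0)) \<ge> 0" using y v by (simp add: S_def)
      ultimately show ?thesis by (smt (verit) mult_pos_pos)
    qed
    then have "u * snd x + v * snd y > u * \<phi> (fst x) + v * \<phi> (fst y) - \<phi> 0"
      using uv by (simp add: algebra_simps) (smt (verit) distrib_right mult_cancel_right1 uv)
    then show "u *\<^sub>R x + v *\<^sub>R y \<in> S" using c1 by (simp add: S_def)
  qed
  have cT: "convex T"
    unfolding convex_def T_def by (simp add: matrix_vector_right_distrib matrix_vector_mult_scaleR)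
  have neS: "S \<noteq> {}" using S_def by (metis (mono_tags, lifting) diff_self empty_iff fst_conv mem_Collect_eq snd_conv zero_less_one)
  have neT: "T \<noteq> {}" unfolding T_def by (metis (mono_tags, lifting) empty_iff fst_conv matrix_vector_mult_0_right mem_Collect_eq snd_conv)
  have disj: "S \<inter> T = {}"
  proof (rule ccontr)
    assume "S \<inter> T \<noteq> {}"
    then obtain z where "z \<in> S" "z \<in> T" by blast
    then show False using opt[of "fst z"] by (simp add: S_def T_def)
  qed
  obtain a b where a0: "a \<noteq> 0" and aS: "\<forall>x\<in>S. a \<bullet> x \<le> b" and aT: "\<forall>x\<in>T. a \<bullet> x \<ge> b"
    using separating_hyperplane_sets[OF cS cT neS neT disj] by blast
  obtain p \<beta> where ap: "a = (p, \<beta>)" by (cases a)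
  have b0: "b \<le> 0" using aT[rule_format, of "(0,0)"] by (simp add: T_def ap)
  have pN: "p \<bullet> w = 0" if Aw: "A *v w = 0" for w
  proof (rule ccontr)
    assume ne: "p \<bullet> w \<noteq> 0"
    define t where "t = (b - 1) / (p \<bullet> w)"
    have "(t *\<^sub>R w, 0) \<in> T" using Aw by (simp add: T_def matrix_vector_mult_scaleR)
    then have "b \<le> p \<bullet> (t *\<^sub>R w)" using aT ap by force
    moreover have "p \<bullet> (t *\<^sub>R w) = b - 1" using ne by (simp add: t_def)
    ultimately show False by simp
  qed
  have "(0, 1) \<in> S" by (simp add: S_def)
  then have "\<beta> \<le> b" using aS ap by force
  then have \<beta>le: "\<beta> \<le> 0" using b0 by simp
  have \<beta>ne: "\<beta> \<noteq> 0"
  proof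
    assume \<beta>z: "\<beta> = 0"
    have "(p, \<phi> p - \<phi> 0 + 1) \<in> S" by (simp add: S_def)
    then have "p \<bullet> p \<le> b" using aS ap \<beta>z by force
    then have "p \<bullet> p \<le> 0" using b0 by simp
    then have "p = 0" by (metis inner_eq_zero_iff inner_ge_zero order_antisym)
    then show False using a0 ap \<beta>z by (simp add: zero_prod_def)
  qed
  then have \<beta>neg: "\<beta> < 0" using \<beta>le by simp
  define gr where "gr = (-1/\<beta>) *\<^sub>R p"
  have grN: "gr \<bullet> w = 0" if "A *v w = 0" for w using pN[OF that] by (simp add: gr_def)
  obtain y where gy: "gr = transpose A *v y" using perp_null_range[OF grN] by blast
  have main: "\<phi> w \<ge> \<phi> 0 + gr \<bullet> w" for w
  proof (rule ccontr)
    assume "\<not> ?thesis"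
    then have lt: "\<phi> w - \<phi> 0 < gr \<bullet> w" by simp
    define t where "t = ((\<phi> w - \<phi> 0) + gr \<bullet> w) / 2"
    have "(w, t) \<in> S" using lt by (simp add: S_def t_def)
    then have "p \<bullet> w + \<beta> * t \<le> b" using aS ap by force
    then have "p \<bullet> w + \<beta> * t \<le> 0" using b0 by simp
    moreover have "gr \<bullet> w = (p \<bullet> w) / (-\<beta>)" by (simp add: gr_def)
    moreover have "t < gr \<bullet> w" using lt by (simp add: t_def)
    ultimately have "t < (p \<bullet> w) / (-\<beta>)" by simp
    moreover have nb: "-\<beta> > 0" using \<beta>neg by simp
    ultimately have "t * (-\<beta>) < p \<bullet> w" using pos_less_divide_eq[OF nb] by blast
    then show False using \<open>p \<bullet> w + \<beta> * t \<le> 0\<close> by (simp add: algebra_simps)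
  qed
  show ?thesis using main gy by blast
qed

lemma small_t_arg:
  fixes E K :: real
  assumes K: "K \<ge> 0" and h: "\<And>t. 0 < t \<Longrightarrow> t \<le> 1 \<Longrightarrow> 0 \<le> E + t * K"
  shows "0 \<le> E"
proof (rule ccontr)
  assume "\<not> 0 \<le> E"
  then have E: "E < 0" by simp
  define t where "t = min 1 (-E / (2 * (K + 1)))"
  have "-E / (2 * (K + 1)) > 0" by (intro divide_pos_pos) (use E K in auto)
  then have t0: "0 < t" by (simp add: t_def)
  have t1: "t \<le> 1" by (simp add: t_def)
  have pos: "0 < 2 * (K + 1)" using K by simp
  have "t \<le> -E / (2 * (K + 1))" by (simp add: t_def)
  then have "t * (2 * (K + 1)) \<le> -E" using pos_le_divide_eq[OF pos] by blast
  moreover have "t * (2 * (K + 1)) = 2 * (t * K) + 2 * t" by (simp add: algebra_simps)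
  ultimately have "t * K \<le> -E / 2" using t0 by linarith
  then have "E + t * K < 0" using E by simp
  with h[OF t0 t1] show False by simp
qed

lemma kkt_step:
  fixes A :: "real^'n^'m" and q u z0 :: "real^'n" and r :: "real^'n \<Rightarrow> real" and a :: real
  assumes cvx: "convex_on UNIV r" and a: "a > 0" and Au: "A *v u = 0"
    and opt: "\<And>w. A *v w = 0 \<Longrightarrow>
        q \<bullet> u + norm u ^ 2 / (2 * a) + r (z0 + u) \<le> q \<bullet> w + norm w ^ 2 / (2 * a) + r (z0 + w)"
  shows "\<exists>y. \<exists>gr \<in> subdiff r (z0 + u). q + (1/a) *\<^sub>R u + gr = transpose A *v y"
proof -
  define \<phi> where "\<phi> w = (q + (1/a) *\<^sub>R u) \<bullet> w + r (z0 + u + w)" for w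
  have cphi: "convex_on UNIV \<phi>"
  proof (rule convex_onI)
    fix t :: real and x y :: "real^'n" assume t: "0 < t" "t < 1"
    define cc where "cc = q + (1/a) *\<^sub>R u"
    have e: "z0 + u + ((1 - t) *\<^sub>R x + t *\<^sub>R y) = (1 - t) *\<^sub>R (z0 + u + x) + t *\<^sub>R (z0 + u + y)"
      by (simp add: algebra_simps)
    have lin: "cc \<bullet> ((1-t) *\<^sub>R x + t *\<^sub>R y) = (1-t) * (cc \<bullet> x) + t * (cc \<bullet> y)"
      by (simp add: inner_add_right)
    have eq1: "\<phi> ((1 - t) *\<^sub>R x + t *\<^sub>R y) = (1-t) * (cc \<bullet> x) + t * (cc \<bullet> y) + r ((1 - t) *\<^sub>R (z0 + u + x) + t *\<^sub>R (z0 + u + y))"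
      unfolding \<phi>_def cc_def[symmetric] e lin ..
    have ineq: "r ((1 - t) *\<^sub>R (z0 + u + x) + t *\<^sub>R (z0 + u + y)) \<le> (1 - t) * r (z0 + u + x) + t * r (z0 + u + y)"
      using convex_onD[OF cvx, of t] t by simp
    have eq2: "(1-t) * \<phi> x + t * \<phi> y = (1-t) * (cc \<bullet> x) + t * (cc \<bullet> y) + ((1 - t) * r (z0 + u + x) + t * r (z0 + u + y))"
      unfolding \<phi>_def cc_def[symmetric] by (simp add: algebra_simps)
    show "\<phi> ((1 - t) *\<^sub>R x + t *\<^sub>R y) \<le> (1 - t) * \<phi> x + t * \<phi> y"
      using eq1 eq2 ineq by linarith
  qed simp
  have opt2: "\<phi> 0 \<le> \<phi> w" if Aw: "A *v w = 0" for w
  proof -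
    define E where "E = q \<bullet> w + (u \<bullet> w) / a + (r (z0 + u + w) - r (z0 + u))"
    define Q where "Q = norm w ^ 2 / (2 * a)"
    have Q0: "Q \<ge> 0" using a by (simp add: Q_def)
    have "0 \<le> E + t * Q" if t: "0 < t" "t \<le> 1" for t
    proof -
      have "A *v (u + t *\<^sub>R w) = 0" using Au Aw by (simp add: matrix_vector_right_distrib matrix_vector_mult_scaleR)
      then have o: "q \<bullet> u + norm u ^ 2 / (2 * a) + r (z0 + u)
          \<le> q \<bullet> (u + t *\<^sub>R w) + norm (u + t *\<^sub>R w) ^ 2 / (2 * a) + r (z0 + (u + t *\<^sub>R w))"
        by (rule opt)
      have "r (z0 + (u + t *\<^sub>R w)) = r ((1 - t) *\<^sub>R (z0 + u) + t *\<^sub>R (z0 + u + w))"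
        by (simp add: algebra_simps)
      also have "\<dots> \<le> (1 - t) * r (z0 + u) + t * r (z0 + u + w)"
        using convex_onD[OF cvx, of t] t by simp
      finally have rc: "r (z0 + (u + t *\<^sub>R w)) \<le> (1 - t) * r (z0 + u) + t * r (z0 + u + w)" .
      have rc2: "(1 - t) * r (z0 + u) + t * r (z0 + u + w) = r (z0 + u) + t * (r (z0 + u + w) - r (z0 + u))"
        by (simp add: algebra_simps)
      have nn: "norm (u + t *\<^sub>R w) ^ 2 = norm u ^ 2 + 2 * t * (u \<bullet> w) + t^2 * norm w ^ 2"
        unfolding power2_norm_eq_inner by (simp add: inner_add_left inner_add_right inner_commute algebra_simps power2_eq_square)
      have qi: "q \<bullet> (u + t *\<^sub>R w) = q \<bullet> u + t * (q \<bullet> w)"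
        by (simp add: inner_add_right)
      have dv: "(norm u ^ 2 + 2 * t * (u \<bullet> w) + t^2 * norm w ^ 2) / (2 * a)
              = norm u ^ 2 / (2 * a) + t * ((u \<bullet> w) / a) + t * (t * Q)"
        using a unfolding Q_def by (simp add: field_simps power2_eq_square)
      have nd: "norm (u + t *\<^sub>R w) ^ 2 / (2 * a) = norm u ^ 2 / (2 * a) + t * ((u \<bullet> w) / a) + t * (t * Q)"
        unfolding nn dv by (rule refl)
      have "0 \<le> t * (q \<bullet> w) + t * ((u \<bullet> w) / a) + t * (t * Q) + t * (r (z0 + u + w) - r (z0 + u))"
        using o rc rc2 nd qi by linarith
      also have "\<dots> = t * (E + t * Q)"
        unfolding E_def by (simp add: algebra_simps)
      finally show ?thesis using t by (simp add: zero_le_mult_iff)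
    qed
    then have "0 \<le> E" by (rule small_t_arg[OF Q0])
    moreover have "\<phi> w - \<phi> 0 = E"
      unfolding \<phi>_def E_def by (simp add: inner_add_left)
    ultimately show ?thesis by simp
  qed
  from sep_kkt[OF cphi opt2] obtain y where y: "\<forall>w. \<phi> w \<ge> \<phi> 0 + (transpose A *v y) \<bullet> w" ..
  define gr where "gr = transpose A *v y - (q + (1/a) *\<^sub>R u)"
  have "gr \<in> subdiff r (z0 + u)"
    unfolding subdiff_def
  proof (intro CollectI allI)
    fix x
    have "\<phi> (x - (z0 + u)) \<ge> \<phi> 0 + (transpose A *v y) \<bullet> (x - (z0 + u))" by (rule y[rule_format])
    then show "r (z0 + u) + gr \<bullet> (x - (z0 + u)) \<le> r x"
      unfolding \<phi>_def gr_def by (simp add: inner_diff_left algebra_simps)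
  qed
  moreover have "q + (1/a) *\<^sub>R u + gr = transpose A *v y" by (simp add: gr_def)
  ultimately show ?thesis by blast
qed

lemma seg_pt: "a + t *\<^sub>R (b - a) \<in> closed_segment a b" if "t \<in> {0..1}" for a b :: "'a::real_vector"
proof -
  have "a + t *\<^sub>R (b - a) = (1 - t) *\<^sub>R a + t *\<^sub>R b" by (simp add: algebra_simps)
  then show ?thesis using that unfolding closed_segment_def by auto
qed

lemma seg_norm: "z \<in> closed_segment a b \<Longrightarrow> norm (z - a) \<le> norm (b - a)" for a b z :: "'a::euclidean_space"
  using dist_in_closed_segment[of z a b] by (simp add: dist_norm norm_minus_commute)

lemma taylor_f:
  fixes f :: "real^'n \<Rightarrow> real" and g :: "real^'n \<Rightarrow> real^'n"
  assumes fd: "\<And>z. (f has_derivative (\<lambda>h. g z \<bullet> h)) (at z)"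
    and X: "convex X" and x: "x \<in> X" and y: "y \<in> X"
    and L: "\<forall>a\<in>X. \<forall>b\<in>X. norm (g a - g b) \<le> L * norm (a - b)"
  shows "f y \<le> f x + g x \<bullet> (y - x) + L * norm (y - x) ^ 2"
proof -
  let ?S = "closed_segment x y"
  have SX: "?S \<subseteq> X" using closed_segment_subset[OF x y X] .
  have "norm (f y - f x - g x \<bullet> (y - x)) \<le> norm (y - x) * (L * norm (y - x))"
  proof (rule differentiable_bound_linearization[where S = ?S and f' = "\<lambda>z h. g z \<bullet> h"])
    show "\<And>t. t \<in> {0..1} \<Longrightarrow> x + t *\<^sub>R (y - x) \<in> ?S" by (rule seg_pt)
    show "\<And>z. z \<in> ?S \<Longrightarrow> (f has_derivative (\<lambda>h. g z \<bullet> h)) (at z within ?S)"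
      using fd has_derivative_at_withinI by blast
    show "x \<in> ?S" by simp
    fix z assume z: "z \<in> ?S"
    have L0: "L * norm (z - x) \<le> L * norm (y - x)"
    proof (cases "z = x")
      case True
      have "0 \<le> norm (g x - g y)" by simp
      also have "\<dots> \<le> L * norm (x - y)" using L x y by auto
      finally have "0 \<le> L * norm (y - x)" by (simp add: norm_minus_commute)
      then show ?thesis using True by simp
    next
      case False
      have "0 \<le> norm (g z - g x)" by simp
      also have "\<dots> \<le> L * norm (z - x)" using L z SX x by auto
      finally have "L \<ge> 0" using False by (simp add: zero_le_mult_iff)
      then show ?thesis using seg_norm[OF z] by (simp add: mult_left_mono)
    qed
    have "onorm ((\<lambda>h. g z \<bullet> h) - (\<lambda>h. g x \<bullet> h)) \<le> L * norm (y - x)"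
    proof (rule onorm_le)
      fix h
      have "norm (((\<lambda>h. g z \<bullet> h) - (\<lambda>h. g x \<bullet> h)) h) = \<bar>(g z - g x) \<bullet> h\<bar>"
        by (simp add: inner_diff_left)
      also have "\<dots> \<le> norm (g z - g x) * norm h" by (rule Cauchy_Schwarz_ineq2)
      also have "\<dots> \<le> (L * norm (z - x)) * norm h"
        using L z SX x by (intro mult_right_mono) auto
      also have "\<dots> \<le> (L * norm (y - x)) * norm h"
        using L0 by (intro mult_right_mono) auto
      finally show "norm (((\<lambda>h. g z \<bullet> h) - (\<lambda>h. g x \<bullet> h)) h) \<le> L * norm (y - x) * norm h" .
    qed
    then show "onorm ((\<lambda>h. g z \<bullet> h) - (\<lambda>h. g x \<bullet> h)) \<le> L * norm (y - x)" .
  qed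
  then show ?thesis by (simp add: power2_eq_square abs_le_iff algebra_simps)
qed

lemma taylor_c:
  fixes c :: "real^'n \<Rightarrow> real^'m" and J :: "real^'n \<Rightarrow> real^'n^'m"
  assumes cd: "\<And>z. (c has_derivative (\<lambda>h. J z *v h)) (at z)"
    and X: "convex X" and x: "x \<in> X" and y: "y \<in> X"
    and L: "\<forall>a\<in>X. \<forall>b\<in>X. norm (J a - J b) \<le> L * norm (a - b)"
  shows "norm (c y - c x - J x *v (y - x)) \<le> real CARD('m) * real CARD('n) * L * norm (y - x) ^ 2"
proof -
  let ?S = "closed_segment x y"
  let ?N = "real CARD('m) * real CARD('n)"
  have SX: "?S \<subseteq> X" using closed_segment_subset[OF x y X] .
  have "norm (c y - c x - J x *v (y - x)) \<le> norm (y - x) * (?N * L * norm (y - x))"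
  proof (rule differentiable_bound_linearization[where S = ?S and f' = "\<lambda>z h. J z *v h"])
    show "\<And>t. t \<in> {0..1} \<Longrightarrow> x + t *\<^sub>R (y - x) \<in> ?S" by (rule seg_pt)
    show "\<And>z. z \<in> ?S \<Longrightarrow> (c has_derivative (\<lambda>h. J z *v h)) (at z within ?S)"
      using cd has_derivative_at_withinI by blast
    show "x \<in> ?S" by simp
    fix z assume z: "z \<in> ?S"
    have L0: "L * norm (z - x) \<le> L * norm (y - x)"
    proof (cases "z = x")
      case True
      have "0 \<le> norm (J x - J y)" by simp
      also have "\<dots> \<le> L * norm (x - y)" using L x y by auto
      finally have "0 \<le> L * norm (y - x)" by (simp add: norm_minus_commute)
      then show ?thesis using True by simp
    next
      case False
      have "0 \<le> norm (J z - J x)" by simp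
      also have "\<dots> \<le> L * norm (z - x)" using L z SX x by auto
      finally have "L \<ge> 0" using False by (simp add: zero_le_mult_iff)
      then show ?thesis using seg_norm[OF z] by (simp add: mult_left_mono)
    qed
    have "onorm ((\<lambda>h. J z *v h) - (\<lambda>h. J x *v h)) \<le> ?N * L * norm (y - x)"
    proof (rule onorm_le)
      fix h
      have "norm (((\<lambda>h. J z *v h) - (\<lambda>h. J x *v h)) h) = norm ((J z - J x) *v h)"
        by (simp add: matrix_vector_mult_diff_rdistrib)
      also have "\<dots> \<le> ?N * norm (J z - J x) * norm h" by (rule matvec_bound)
      also have "\<dots> \<le> ?N * (L * norm (z - x)) * norm h"
        using L z SX x by (intro mult_right_mono mult_left_mono) auto
      also have "\<dots> \<le> ?N * (L * norm (y - x)) * norm h"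
        by (rule mult_right_mono[OF mult_left_mono[OF L0]]) auto
      finally show "norm (((\<lambda>h. J z *v h) - (\<lambda>h. J x *v h)) h) \<le> ?N * L * norm (y - x) * norm h"
        by (simp add: mult.assoc)
    qed
    then show "onorm ((\<lambda>h. J z *v h) - (\<lambda>h. J x *v h)) \<le> ?N * L * norm (y - x)" .
  qed
  then show ?thesis by (simp add: power2_eq_square algebra_simps)
qed

locale alg =

  fixes f :: "real^'n \<Rightarrow> real" and g :: "real^'n \<Rightarrow> real^'n"
    and c :: "real^'n \<Rightarrow> real^'m" and J :: "real^'n \<Rightarrow> real^'n^'m"
    and r :: "real^'n \<Rightarrow> real"
    and \<kappa>v \<sigma>c \<epsilon>\<tau> \<xi> \<eta> \<sigma>u \<tau>init \<sigma>min :: real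
    and x v u s :: "nat \<Rightarrow> real^'n" and \<alpha> \<tau> :: "nat \<Rightarrow> real"
    and X :: "(real^'n) set" and xstar :: "real^'n"
  assumes dims: "CARD('m) \<le> CARD('n)"
    and f_deriv: "\<And>z. (f has_derivative (\<lambda>h. g z \<bullet> h)) (at z)"
    and g_cont: "continuous_on UNIV g"
    and c_deriv: "\<And>z. (c has_derivative (\<lambda>h. J z *v h)) (at z)"
    and J_cont: "continuous_on UNIV J"
    and r_convex: "convex_on UNIV r"
    and r_nonneg: "\<And>z. r z \<ge> 0"
    and \<kappa>v_pos: "\<kappa>v > 0"
    and \<sigma>c: "0 < \<sigma>c" "\<sigma>c < 1"
    and \<epsilon>\<tau>: "0 < \<epsilon>\<tau>" "\<epsilon>\<tau> < 1"
    and \<xi>: "0 < \<xi>" "\<xi> < 1"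
    and \<eta>: "0 < \<eta>" "\<eta> < 1"
    and \<sigma>u: "0 < \<sigma>u" "\<sigma>u \<le> 1/2"
    and \<alpha>0: "\<alpha> 0 > 0"
    and \<tau>init: "\<tau>init > 0"
    and step1a: "\<And>k. transpose (J (x k)) *v c (x k) \<noteq> 0 \<Longrightarrow>
        (\<exists>w. v k = transpose (J (x k)) *v w)
      \<and> norm (v k) \<le> \<kappa>v * \<alpha> k * norm (transpose (J (x k)) *v c (x k))
      \<and> (\<exists>\<beta>c. 0 \<le> \<beta>c \<and> \<beta>c \<le> \<kappa>v * \<alpha> k
           \<and> (\<forall>\<beta>. 0 \<le> \<beta> \<and> \<beta> \<le> \<kappa>v * \<alpha> k \<longrightarrow>
                 (1/2) * norm (c (x k) - \<beta>c *\<^sub>R (J (x k) *v (transpose (J (x k)) *v c (x k)))) ^ 2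
               \<le> (1/2) * norm (c (x k) - \<beta> *\<^sub>R (J (x k) *v (transpose (J (x k)) *v c (x k)))) ^ 2)
           \<and> norm (c (x k) + J (x k) *v v k)
             \<le> norm (c (x k) + J (x k) *v (- \<beta>c *\<^sub>R (transpose (J (x k)) *v c (x k)))))"
    and step1b: "\<And>k. transpose (J (x k)) *v c (x k) = 0 \<Longrightarrow> v k = 0 \<and> c (x k) = 0"
    and step2: "\<And>k. J (x k) *v u k = 0
      \<and> (\<forall>w. J (x k) *v w = 0 \<longrightarrow>
            g (x k) \<bullet> u k + norm (u k) ^ 2 / (2 * \<alpha> k) + r (x k + v k + u k)
          \<le> g (x k) \<bullet> w + norm w ^ 2 / (2 * \<alpha> k) + r (x k + v k + w))"
    and s_def: "\<And>k. s k = v k + u k"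
    and s_nz: "\<And>k. s k \<noteq> 0"
    and step3: "\<And>k. (let \<tau>prev = (if k = 0 then \<tau>init else \<tau> (k - 1));
                        D = g (x k) \<bullet> s k + (\<sigma>u + 1/2) * norm (s k) ^ 2 / \<alpha> k
                            + r (x k + s k) - r (x k);
                        t = (1 - \<sigma>c) * (norm (c (x k)) - norm (c (x k) + J (x k) *v v k)) / D
                    in \<tau> k = (if D \<le> 0 \<or> \<tau>prev \<le> t then \<tau>prev
                              else min ((1 - \<epsilon>\<tau>) * \<tau>prev) t))"
    and step4: "\<And>k. (if merit f r c (\<tau> k) (x k + s k)
                           \<le> merit f r c (\<tau> k) (x k) - \<eta> * dq r c (x k) (g (x k)) (J (x k)) (\<alpha> k) (s k) (\<tau> k)
                      then x (Suc k) = x k + s k \<and> \<alpha> (Suc k) = \<alpha> k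
                      else x (Suc k) = x k \<and> \<alpha> (Suc k) = \<xi> * \<alpha> k)"
    and X_open: "open X" and X_convex: "convex X"
    and X_iter: "\<And>k. x k \<in> X \<and> x k + s k \<in> X"
    and f_bdd: "bdd_below (f ` X)"
    and g_bdd: "\<exists>B. \<forall>z\<in>X. norm (g z) \<le> B"
    and g_lip: "\<exists>L. \<forall>y\<in>X. \<forall>z\<in>X. norm (g y - g z) \<le> L * norm (y - z)"
    and c_bdd: "\<exists>B. \<forall>z\<in>X. norm (c z) \<le> B"
    and J_bdd: "\<exists>B. \<forall>z\<in>X. norm (J z) \<le> B"
    and J_lip: "\<exists>L. \<forall>y\<in>X. \<forall>z\<in>X. norm (J y - J z) \<le> L * norm (y - z)"
    and subgrad_bdd: "\<exists>B. \<forall>z\<in>X. \<forall>gr\<in>subdiff r z. norm gr \<le> B"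
    and \<sigma>min_pos: "\<sigma>min > 0"
    and \<sigma>min_bd: "\<And>k. sigma_min_sv (J (x k)) \<ge> \<sigma>min"
    and limpt: "\<exists>h. strict_mono h \<and> (x \<circ> h) \<longlonglongrightarrow> xstar"
begin

lemma step4':
  "(merit f r c (\<tau> k) (x k + s k) \<le> merit f r c (\<tau> k) (x k) - \<eta> * dq r c (x k) (g (x k)) (J (x k)) (\<alpha> k) (s k) (\<tau> k)
      \<longrightarrow> x (Suc k) = x k + s k \<and> \<alpha> (Suc k) = \<alpha> k)
   \<and> (\<not> merit f r c (\<tau> k) (x k + s k) \<le> merit f r c (\<tau> k) (x k) - \<eta> * dq r c (x k) (g (x k)) (J (x k)) (\<alpha> k) (s k) (\<tau> k)
      \<longrightarrow> x (Suc k) = x k \<and> \<alpha> (Suc k) = \<xi> * \<alpha> k)"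
  using step4[of k] by (auto split: if_splits)

lemma alpha_pos: "\<alpha> k > 0"
proof (induction k)
  case 0 then show ?case using \<alpha>0 .
next
  case (Suc k) then show ?case using step4'[of k] \<xi> by (cases "merit f r c (\<tau> k) (x k + s k) \<le> merit f r c (\<tau> k) (x k) - \<eta> * dq r c (x k) (g (x k)) (J (x k)) (\<alpha> k) (s k) (\<tau> k)") auto
qed

lemma alpha_Suc_le: "\<alpha> (Suc k) \<le> \<alpha> k"
  using step4'[of k] \<xi> alpha_pos[of k]
  by (cases "merit f r c (\<tau> k) (x k + s k) \<le> merit f r c (\<tau> k) (x k) - \<eta> * dq r c (x k) (g (x k)) (J (x k)) (\<alpha> k) (s k) (\<tau> k)") auto

lemma alpha_dec: "decseq \<alpha>"
  using alpha_Suc_le by (rule decseq_SucI)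

lemma alpha_le0: "\<alpha> k \<le> \<alpha> 0"
  using decseqD[OF alpha_dec, of 0 k] by simp

lemma kkt_k: "\<exists>y. \<exists>gr \<in> subdiff r (x k + s k). g (x k) + (1 / \<alpha> k) *\<^sub>R u k + gr = transpose (J (x k)) *v y"
proof -
  have e: "x k + s k = (x k + v k) + u k" by (simp add: s_def add.assoc)
  show ?thesis unfolding e
  proof (rule kkt_step[OF r_convex alpha_pos])
    show "J (x k) *v u k = 0" using step2[of k] by simp
    fix w assume "J (x k) *v w = 0"
    then show "g (x k) \<bullet> u k + norm (u k) ^ 2 / (2 * \<alpha> k) + r (x k + v k + u k)
        \<le> g (x k) \<bullet> w + norm w ^ 2 / (2 * \<alpha> k) + r (x k + v k + w)"
      using step2[of k] by blast
  qed
qed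

lemma Ju: "J (x k) *v u k = 0" using step2[of k] by simp

lemma orth: "v k \<bullet> u k = 0"
proof (cases "transpose (J (x k)) *v c (x k) = 0")
  case True then show ?thesis using step1b[of k] by simp
next
  case False
  then obtain w where "v k = transpose (J (x k)) *v w" using step1a[of k] by blast
  then show ?thesis using Ju[of k] transpose_inner[of "J (x k)" w "u k"] by simp
qed

lemma norm_s: "norm (s k) ^ 2 = norm (v k) ^ 2 + norm (u k) ^ 2"
  unfolding s_def power2_norm_eq_inner using orth[of k]
  by (simp add: inner_add_left inner_add_right inner_commute)

lemma v_bound: "norm (v k) \<le> \<kappa>v * \<alpha> k * norm (transpose (J (x k)) *v c (x k))"
proof (cases "transpose (J (x k)) *v c (x k) = 0")
  case True then show ?thesis using step1b[of k] by simp
next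
  case False then show ?thesis using step1a[of k] by blast
qed

lemma sig: "\<sigma>min * norm y \<le> norm (transpose (J (x k)) *v y)"
proof (cases "y = 0")
  case True then show ?thesis by simp
next
  case False
  let ?S = "{norm (transpose (J (x k)) *v y) | y. norm y = 1}"
  have mem: "norm (transpose (J (x k)) *v ((1/norm y) *\<^sub>R y)) \<in> ?S"
    using False by auto
  have bdd: "bdd_below ?S" by (rule bdd_belowI[of _ 0]) auto
  have "\<sigma>min \<le> Inf ?S" using \<sigma>min_bd[of k] unfolding sigma_min_sv_def .
  also have "\<dots> \<le> norm (transpose (J (x k)) *v ((1/norm y) *\<^sub>R y))" by (rule cInf_lower[OF mem bdd])
  also have "\<dots> = norm (transpose (J (x k)) *v y) / norm y"
    by (simp add: matrix_vector_mult_scaleR del: transpose_matrix_vector)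
  finally show ?thesis using False by (simp add: pos_le_divide_eq)
qed

end

context alg begin

definition "GB = max 0 (SOME B. \<forall>z\<in>X. norm (g z) \<le> B)"
definition "RB = max 0 (SOME B. \<forall>z\<in>X. \<forall>gr\<in>subdiff r z. norm gr \<le> B)"
definition "CB = max 0 (SOME B. \<forall>z\<in>X. norm (c z) \<le> B)"
definition "JB = max 1 (SOME B. \<forall>z\<in>X. norm (J z) \<le> B)"
definition "LG = max 0 (SOME L. \<forall>y\<in>X. \<forall>z\<in>X. norm (g y - g z) \<le> L * norm (y - z))"
definition "LJ = max 0 (SOME L. \<forall>y\<in>X. \<forall>z\<in>X. norm (J y - J z) \<le> L * norm (y - z))"
definition "flow = (SOME b. \<forall>z\<in>X. b \<le> f z)"
definition "NC = real CARD('m) * real CARD('n)"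
definition "JN = NC * JB"
definition "KB = JN * CB"

lemma GB: "z \<in> X \<Longrightarrow> norm (g z) \<le> GB" "GB \<ge> 0"
proof -
  have "\<forall>z\<in>X. norm (g z) \<le> (SOME B. \<forall>z\<in>X. norm (g z) \<le> B)" using someI_ex[OF g_bdd] .
  then show "z \<in> X \<Longrightarrow> norm (g z) \<le> GB" unfolding GB_def by force
qed (simp add: GB_def)

lemma RB: "z \<in> X \<Longrightarrow> gr \<in> subdiff r z \<Longrightarrow> norm gr \<le> RB" "RB \<ge> 0"
proof -
  have "\<forall>z\<in>X. \<forall>gr\<in>subdiff r z. norm gr \<le> (SOME B. \<forall>z\<in>X. \<forall>gr\<in>subdiff r z. norm gr \<le> B)"
    using someI_ex[OF subgrad_bdd] .
  then show "z \<in> X \<Longrightarrow> gr \<in> subdiff r z \<Longrightarrow> norm gr \<le> RB" unfolding RB_def by force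
qed (simp add: RB_def)

lemma CB: "z \<in> X \<Longrightarrow> norm (c z) \<le> CB" "CB \<ge> 0"
proof -
  have "\<forall>z\<in>X. norm (c z) \<le> (SOME B. \<forall>z\<in>X. norm (c z) \<le> B)" using someI_ex[OF c_bdd] .
  then show "z \<in> X \<Longrightarrow> norm (c z) \<le> CB" unfolding CB_def by force
qed (simp add: CB_def)

lemma JB: "z \<in> X \<Longrightarrow> norm (J z) \<le> JB" "JB \<ge> 1"
proof -
  have "\<forall>z\<in>X. norm (J z) \<le> (SOME B. \<forall>z\<in>X. norm (J z) \<le> B)" using someI_ex[OF J_bdd] .
  then show "z \<in> X \<Longrightarrow> norm (J z) \<le> JB" unfolding JB_def by force
qed (simp add: JB_def)

lemma LG: "\<forall>y\<in>X. \<forall>z\<in>X. norm (g y - g z) \<le> LG * norm (y - z)" "LG \<ge> 0"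
proof -
  have "\<forall>y\<in>X. \<forall>z\<in>X. norm (g y - g z) \<le> (SOME L. \<forall>y\<in>X. \<forall>z\<in>X. norm (g y - g z) \<le> L * norm (y - z)) * norm (y - z)"
    using someI_ex[OF g_lip] .
  then show "\<forall>y\<in>X. \<forall>z\<in>X. norm (g y - g z) \<le> LG * norm (y - z)" unfolding LG_def
    by (meson max.cobounded2 mult_right_mono norm_ge_zero order_trans)
qed (simp add: LG_def)

lemma LJ: "\<forall>y\<in>X. \<forall>z\<in>X. norm (J y - J z) \<le> LJ * norm (y - z)" "LJ \<ge> 0"
proof -
  have "\<forall>y\<in>X. \<forall>z\<in>X. norm (J y - J z) \<le> (SOME L. \<forall>y\<in>X. \<forall>z\<in>X. norm (J y - J z) \<le> L * norm (y - z)) * norm (y - z)"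
    using someI_ex[OF J_lip] .
  then show "\<forall>y\<in>X. \<forall>z\<in>X. norm (J y - J z) \<le> LJ * norm (y - z)" unfolding LJ_def
    by (meson max.cobounded2 mult_right_mono norm_ge_zero order_trans)
qed (simp add: LJ_def)

lemma flow: "z \<in> X \<Longrightarrow> flow \<le> f z"
proof -
  have "\<exists>b. \<forall>z\<in>X. b \<le> f z" using f_bdd unfolding bdd_below_def by auto
  then have "\<forall>z\<in>X. flow \<le> f z" unfolding flow_def by (rule someI_ex)
  then show "z \<in> X \<Longrightarrow> flow \<le> f z" by blast
qed

lemma NC: "NC \<ge> 1"
proof -
  have "real CARD('m) \<ge> 1" "real CARD('n) \<ge> 1" by auto
  then show ?thesis unfolding NC_def by (metis mult_mono' mult_1 zero_le_one)
qed

lemma JN: "JN \<ge> 1" unfolding JN_def using NC JB(2) by (metis mult_mono' mult_1 zero_le_one)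

lemma KB: "KB \<ge> 0" unfolding KB_def using JN CB(2) by simp

lemma xX: "x k \<in> X" and xsX: "x k + s k \<in> X" using X_iter[of k] by auto

lemma Jk_bound: "norm (J (x k) *v w) \<le> JN * norm w"
proof -
  have "norm (J (x k) *v w) \<le> NC * norm (J (x k)) * norm w" unfolding NC_def by (rule matvec_bound)
  also have "\<dots> \<le> NC * JB * norm w" using JB(1)[OF xX[of k]] NC by (intro mult_right_mono mult_left_mono) auto
  finally show ?thesis unfolding JN_def .
qed

lemma JkT_bound: "norm (transpose (J (x k)) *v w) \<le> JN * norm w"
proof -
  have "norm (transpose (J (x k)) *v w) \<le> NC * norm (J (x k)) * norm w" unfolding NC_def by (rule matvec_boundT)
  also have "\<dots> \<le> NC * JB * norm w" using JB(1)[OF xX[of k]] NC by (intro mult_right_mono mult_left_mono) auto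
  finally show ?thesis unfolding JN_def .
qed

lemma Jc_bound: "norm (transpose (J (x k)) *v c (x k)) \<le> KB"
proof -
  have "norm (transpose (J (x k)) *v c (x k)) \<le> JN * norm (c (x k))" by (rule JkT_bound)
  also have "\<dots> \<le> JN * CB" using CB(1)[OF xX[of k]] JN by (intro mult_left_mono) auto
  finally show ?thesis unfolding KB_def .
qed

definition "Dk k = g (x k) \<bullet> s k + (\<sigma>u + 1/2) * norm (s k) ^ 2 / \<alpha> k + r (x k + s k) - r (x k)"
definition "ell k = norm (c (x k)) - norm (c (x k) + J (x k) *v v k)"

lemma D_bound: "Dk k \<le> (GB + RB) * norm (v k) + norm (v k) ^ 2 / \<alpha> k"
proof -
  obtain y gr where gr: "gr \<in> subdiff r (x k + s k)"
    and eq: "g (x k) + (1 / \<alpha> k) *\<^sub>R u k + gr = transpose (J (x k)) *v y"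
    using kkt_k[of k] by blast
  define a where "a = \<alpha> k"
  have a: "a > 0" using alpha_pos[of k] by (simp add: a_def)
  have grb: "norm gr \<le> RB" using RB(1)[OF xsX gr] .
  have gb: "norm (g (x k)) \<le> GB" using GB(1)[OF xX] .
  have "r (x k) \<ge> r (x k + s k) + gr \<bullet> (x k - (x k + s k))"
    using gr unfolding subdiff_def by blast
  then have rr: "r (x k + s k) - r (x k) \<le> gr \<bullet> s k" by (simp add: inner_diff_right)
  have ggr: "g (x k) + gr = transpose (J (x k)) *v y - (1 / a) *\<^sub>R u k"
    using eq unfolding a_def by (simp add: algebra_simps)
  have "(g (x k) + gr) \<bullet> u k = y \<bullet> (J (x k) *v u k) - (1/a) * (u k \<bullet> u k)"
    unfolding ggr inner_diff_left transpose_inner by simp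
  then have gu: "(g (x k) + gr) \<bullet> u k = - (norm (u k) ^ 2 / a)"
    using Ju[of k] by (simp add: power2_norm_eq_inner)
  have gv: "(g (x k) + gr) \<bullet> v k \<le> (GB + RB) * norm (v k)"
  proof -
    have "(g (x k) + gr) \<bullet> v k \<le> norm (g (x k) + gr) * norm (v k)" by (rule norm_cauchy_schwarz)
    also have "\<dots> \<le> (GB + RB) * norm (v k)"
      using norm_triangle_ineq[of "g (x k)" gr] gb grb by (intro mult_right_mono) auto
    finally show ?thesis .
  qed
  have sv: "(g (x k) + gr) \<bullet> s k = (g (x k) + gr) \<bullet> v k + (g (x k) + gr) \<bullet> u k"
    unfolding s_def by (simp add: inner_add_right)
  have Dle: "Dk k \<le> (g (x k) + gr) \<bullet> s k + (\<sigma>u + 1/2) * norm (s k) ^ 2 / a"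
    unfolding Dk_def a_def using rr by (simp add: inner_add_left)
  have ns: "(\<sigma>u + 1/2) * norm (s k) ^ 2 / a = (\<sigma>u + 1/2) * (norm (v k) ^ 2 / a) + (\<sigma>u + 1/2) * (norm (u k) ^ 2 / a)"
    unfolding norm_s by (simp add: add_divide_distrib distrib_left)
  have n1: "(\<sigma>u + 1/2) * (norm (v k) ^ 2 / a) \<le> norm (v k) ^ 2 / a"
    using \<sigma>u a by (intro mult_left_le_one_le) auto
  have n2: "(\<sigma>u + 1/2) * (norm (u k) ^ 2 / a) \<le> norm (u k) ^ 2 / a"
    using \<sigma>u a by (intro mult_left_le_one_le) auto
  have "Dk k \<le> (GB + RB) * norm (v k) + norm (v k) ^ 2 / a"
    using Dle sv gu gv ns n1 n2 by linarith
  then show ?thesis by (simp add: a_def)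
qed

lemma ell_nonneg: "ell k \<ge> 0"
proof (cases "transpose (J (x k)) *v c (x k) = 0")
  case True then show ?thesis using step1b[of k] by (simp add: ell_def)
next
  case False
  let ?w = "transpose (J (x k)) *v c (x k)"
  have "\<exists>\<beta>c. 0 \<le> \<beta>c \<and> \<beta>c \<le> \<kappa>v * \<alpha> k \<and> (\<forall>\<beta>. 0 \<le> \<beta> \<and> \<beta> \<le> \<kappa>v * \<alpha> k \<longrightarrow>
        (1/2) * norm (c (x k) - \<beta>c *\<^sub>R (J (x k) *v ?w)) ^ 2 \<le> (1/2) * norm (c (x k) - \<beta> *\<^sub>R (J (x k) *v ?w)) ^ 2)
    \<and> norm (c (x k) + J (x k) *v v k) \<le> norm (c (x k) + J (x k) *v (- \<beta>c *\<^sub>R ?w))"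
    using step1a[OF False] by (rule conjunct2[THEN conjunct2])
  then obtain \<beta>c where bb: "0 \<le> \<beta>c \<and> \<beta>c \<le> \<kappa>v * \<alpha> k \<and> (\<forall>\<beta>. 0 \<le> \<beta> \<and> \<beta> \<le> \<kappa>v * \<alpha> k \<longrightarrow>
        (1/2) * norm (c (x k) - \<beta>c *\<^sub>R (J (x k) *v ?w)) ^ 2 \<le> (1/2) * norm (c (x k) - \<beta> *\<^sub>R (J (x k) *v ?w)) ^ 2)
    \<and> norm (c (x k) + J (x k) *v v k) \<le> norm (c (x k) + J (x k) *v (- \<beta>c *\<^sub>R ?w))"
    ..
  have b0: "0 \<le> \<beta>c" using bb by (elim conjE)
  have bopt: "\<forall>\<beta>. 0 \<le> \<beta> \<and> \<beta> \<le> \<kappa>v * \<alpha> k \<longrightarrow>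
        (1/2) * norm (c (x k) - \<beta>c *\<^sub>R (J (x k) *v ?w)) ^ 2 \<le> (1/2) * norm (c (x k) - \<beta> *\<^sub>R (J (x k) *v ?w)) ^ 2"
    using bb by (elim conjE)
  have cv: "norm (c (x k) + J (x k) *v v k) \<le> norm (c (x k) + J (x k) *v (- \<beta>c *\<^sub>R ?w))"
    using bb by (elim conjE)
  have "0 \<le> \<kappa>v * \<alpha> k" using \<kappa>v_pos alpha_pos[of k] by simp
  then have "(1/2) * norm (c (x k) - \<beta>c *\<^sub>R (J (x k) *v ?w)) ^ 2 \<le> (1/2) * norm (c (x k) - 0 *\<^sub>R (J (x k) *v ?w)) ^ 2"
    using bopt[rule_format, of 0] by simp
  then have "norm (c (x k) - \<beta>c *\<^sub>R (J (x k) *v ?w)) ^ 2 \<le> norm (c (x k)) ^ 2"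
    by simp
  then have n1: "norm (c (x k) - \<beta>c *\<^sub>R (J (x k) *v ?w)) \<le> norm (c (x k))"
    by (rule power2_le_imp_le[OF _ norm_ge_zero])
  have e: "c (x k) + J (x k) *v (- \<beta>c *\<^sub>R ?w) = c (x k) - \<beta>c *\<^sub>R (J (x k) *v ?w)"
    using matrix_vector_mult_scaleR[of "J (x k)" "- \<beta>c" ?w] by (simp del: transpose_matrix_vector)
  have "norm (c (x k) + J (x k) *v v k) \<le> norm (c (x k))" using cv n1 unfolding e by linarith
  then show ?thesis unfolding ell_def by linarith
qed

definition "bet k = min (\<kappa>v * \<alpha> k) (1 / JN ^ 2)"

lemma ell_lower:
  assumes ne: "transpose (J (x k)) *v c (x k) \<noteq> 0"
  shows "ell k \<ge> bet k * \<sigma>min * norm (transpose (J (x k)) *v c (x k)) / 2"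
proof -
  let ?w = "transpose (J (x k)) *v c (x k)"
  let ?c = "c (x k)"
  let ?Jw = "J (x k) *v ?w"
  define \<beta> where "\<beta> = bet k"
  have \<beta>0: "0 \<le> \<beta>" using \<kappa>v_pos alpha_pos[of k] JN unfolding \<beta>_def bet_def by simp
  have \<beta>1: "\<beta> \<le> \<kappa>v * \<alpha> k" unfolding \<beta>_def bet_def by simp
  have \<beta>2: "\<beta> * JN ^ 2 \<le> 1"
  proof -
    have p: "JN ^ 2 > 0" using JN by simp
    have "\<beta> \<le> 1 / JN ^ 2" unfolding \<beta>_def bet_def by simp
    then show ?thesis using pos_le_divide_eq[OF p] by blast
  qed
  have "\<exists>\<beta>c. 0 \<le> \<beta>c \<and> \<beta>c \<le> \<kappa>v * \<alpha> k \<and> (\<forall>\<beta>. 0 \<le> \<beta> \<and> \<beta> \<le> \<kappa>v * \<alpha> k \<longrightarrow>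
        (1/2) * norm (?c - \<beta>c *\<^sub>R ?Jw) ^ 2 \<le> (1/2) * norm (?c - \<beta> *\<^sub>R ?Jw) ^ 2)
    \<and> norm (?c + J (x k) *v v k) \<le> norm (?c + J (x k) *v (- \<beta>c *\<^sub>R ?w))"
    using step1a[OF ne] by (rule conjunct2[THEN conjunct2])
  then obtain \<beta>c where bb: "0 \<le> \<beta>c \<and> \<beta>c \<le> \<kappa>v * \<alpha> k \<and> (\<forall>\<beta>. 0 \<le> \<beta> \<and> \<beta> \<le> \<kappa>v * \<alpha> k \<longrightarrow>
        (1/2) * norm (?c - \<beta>c *\<^sub>R ?Jw) ^ 2 \<le> (1/2) * norm (?c - \<beta> *\<^sub>R ?Jw) ^ 2)
    \<and> norm (?c + J (x k) *v v k) \<le> norm (?c + J (x k) *v (- \<beta>c *\<^sub>R ?w))"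
    ..
  have bopt: "\<forall>\<beta>. 0 \<le> \<beta> \<and> \<beta> \<le> \<kappa>v * \<alpha> k \<longrightarrow>
        (1/2) * norm (?c - \<beta>c *\<^sub>R ?Jw) ^ 2 \<le> (1/2) * norm (?c - \<beta> *\<^sub>R ?Jw) ^ 2"
    using bb by (elim conjE)
  have cv: "norm (?c + J (x k) *v v k) \<le> norm (?c + J (x k) *v (- \<beta>c *\<^sub>R ?w))"
    using bb by (elim conjE)
  have e1: "?c + J (x k) *v (- \<beta>c *\<^sub>R ?w) = ?c - \<beta>c *\<^sub>R ?Jw"
    using matrix_vector_mult_scaleR[of "J (x k)" "- \<beta>c" ?w] by (simp del: transpose_matrix_vector)
  have cJw: "?c \<bullet> ?Jw = norm ?w ^ 2"
    using transpose_inner[of "J (x k)" "?c" "?w"] by (simp add: power2_norm_eq_inner)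
  have Jwb: "norm ?Jw \<le> JN * norm ?w" by (rule Jk_bound)
  have "norm (?c - \<beta> *\<^sub>R ?Jw) ^ 2 = norm ?c ^ 2 - 2 * \<beta> * (?c \<bullet> ?Jw) + \<beta>^2 * norm ?Jw ^ 2"
    unfolding power2_norm_eq_inner by (simp add: inner_diff_left inner_diff_right inner_commute power2_eq_square algebra_simps)
  also have "\<dots> \<le> norm ?c ^ 2 - 2 * \<beta> * norm ?w ^ 2 + \<beta>^2 * (JN * norm ?w) ^ 2"
    unfolding cJw using Jwb \<beta>0 by (intro add_left_mono mult_left_mono power_mono) auto
  also have "\<dots> = norm ?c ^ 2 - 2 * \<beta> * norm ?w ^ 2 + \<beta> * (\<beta> * JN ^ 2) * norm ?w ^ 2"
    by (simp add: power2_eq_square algebra_simps)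
  also have "\<dots> \<le> norm ?c ^ 2 - 2 * \<beta> * norm ?w ^ 2 + \<beta> * 1 * norm ?w ^ 2"
    using \<beta>2 \<beta>0 by (intro add_left_mono mult_right_mono mult_left_mono) auto
  finally have q1: "norm (?c - \<beta> *\<^sub>R ?Jw) ^ 2 \<le> norm ?c ^ 2 - \<beta> * norm ?w ^ 2" by simp
  have "norm (?c - \<beta>c *\<^sub>R ?Jw) ^ 2 \<le> norm (?c - \<beta> *\<^sub>R ?Jw) ^ 2"
    using bopt[rule_format, of \<beta>] \<beta>0 \<beta>1 by simp
  moreover have "norm (?c + J (x k) *v v k) ^ 2 \<le> norm (?c - \<beta>c *\<^sub>R ?Jw) ^ 2"
  proof -
    have "norm (?c + J (x k) *v v k) \<le> norm (?c - \<beta>c *\<^sub>R ?Jw)" using cv unfolding e1 .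
    then show ?thesis by (rule power_mono) simp
  qed
  ultimately have bsq: "norm (?c + J (x k) *v v k) ^ 2 \<le> norm ?c ^ 2 - \<beta> * norm ?w ^ 2" using q1 by linarith
  define A where "A = norm ?c"
  define B where "B = norm (?c + J (x k) *v v k)"
  have B0: "B \<ge> 0" unfolding B_def by simp
  have BA: "B \<le> A" using ell_nonneg[of k] unfolding ell_def A_def B_def by simp
  have sA: "\<sigma>min * A \<le> norm ?w" unfolding A_def by (rule sig)
  have "(A - B) * (2 * A) \<ge> (A - B) * (A + B)" using BA by (intro mult_left_mono) auto
  also have "(A - B) * (A + B) = A^2 - B^2" by (simp add: power2_eq_square algebra_simps)
  also have "\<dots> \<ge> \<beta> * norm ?w ^ 2" using bsq unfolding A_def B_def by simp
  finally have m1: "\<beta> * norm ?w ^ 2 \<le> (A - B) * (2 * A)" by simp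
  have "\<beta> * (\<sigma>min * A) * norm ?w \<le> \<beta> * norm ?w * norm ?w"
    using sA \<beta>0 by (simp add: mult_left_mono mult_right_mono)
  also have "\<dots> = \<beta> * norm ?w ^ 2" by (simp add: power2_eq_square)
  finally have m2: "A * (\<beta> * \<sigma>min * norm ?w) \<le> A * (2 * (A - B))" using m1 by (simp add: algebra_simps)
  have Apos: "A > 0"
  proof -
    have "?c \<noteq> 0" using ne by auto
    then show ?thesis unfolding A_def by simp
  qed
  have "\<beta> * \<sigma>min * norm ?w \<le> 2 * (A - B)" using m2 Apos by (simp add: mult_le_cancel_left_pos)
  then show ?thesis unfolding ell_def A_def B_def \<beta>_def by simp
qed

end

context alg begin

definition "tprev k = (if k = 0 then \<tau>init else \<tau> (k - 1))"
definition "trial k = (1 - \<sigma>c) * ell k / Dk k"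

lemma step3': "\<tau> k = (if Dk k \<le> 0 \<or> tprev k \<le> trial k then tprev k else min ((1 - \<epsilon>\<tau>) * tprev k) (trial k))"
  using step3[of k] unfolding Let_def Dk_def[symmetric] ell_def[symmetric] tprev_def[symmetric] trial_def[symmetric] .

lemma tprev_Suc: "tprev (Suc k) = \<tau> k" by (simp add: tprev_def)

lemma tau_le_prev: "tprev k \<ge> 0 \<Longrightarrow> \<tau> k \<le> tprev k"
  using step3'[of k] \<epsilon>\<tau> by (auto simp: min_def mult_le_cancel_right1)

lemma tauD: "\<tau> k \<ge> 0 \<Longrightarrow> \<tau> k * Dk k \<le> (1 - \<sigma>c) * ell k"
proof -
  assume t0: "\<tau> k \<ge> 0"
  have e0: "(1 - \<sigma>c) * ell k \<ge> 0" using ell_nonneg[of k] \<sigma>c by simp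
  show ?thesis
  proof (cases "Dk k \<le> 0")
    case True
    then have "\<tau> k * Dk k \<le> 0" using t0 by (simp add: mult_nonneg_nonpos)
    then show ?thesis using e0 by simp
  next
    case False
    then have Dp: "Dk k > 0" by simp
    have "\<tau> k \<le> trial k" using step3'[of k] False by (auto simp: min_def)
    then have "\<tau> k * Dk k \<le> trial k * Dk k" using Dp by (simp add: mult_right_mono)
    also have "\<dots> = (1 - \<sigma>c) * ell k" using Dp by (simp add: trial_def)
    finally show ?thesis .
  qed
qed

lemma tau_step_lower:
  assumes tp: "tprev k \<ge> 0" and T0: "T \<ge> 0" and tr: "Dk k > 0 \<Longrightarrow> trial k \<ge> T"
  shows "\<tau> k \<ge> min (tprev k) ((1 - \<epsilon>\<tau>) * T)"
proof (cases "Dk k \<le> 0 \<or> tprev k \<le> trial k")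
  case True then show ?thesis using step3'[of k] by simp
next
  case False
  then have Dp: "Dk k > 0" and lt: "trial k < tprev k" by auto
  have tT: "trial k \<ge> T" using tr[OF Dp] .
  have tk: "\<tau> k = min ((1 - \<epsilon>\<tau>) * tprev k) (trial k)" using step3'[of k] False by simp
  have "(1 - \<epsilon>\<tau>) * T \<le> (1 - \<epsilon>\<tau>) * tprev k" using tT lt \<epsilon>\<tau> by (intro mult_left_mono) auto
  moreover have "(1 - \<epsilon>\<tau>) * T \<le> trial k" using tT T0 \<epsilon>\<tau> by (smt (verit) mult_left_le_one_le)
  ultimately show ?thesis unfolding tk by (auto simp: min_def)
qed

definition "MM = \<kappa>v * (GB + RB + \<kappa>v * KB + 1)"
definition "Tm = (1 - \<sigma>c) * \<sigma>min * min \<kappa>v (1 / (JN ^ 2 * \<alpha> 0)) / (2 * MM)"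

lemma MM_pos: "MM > 0"
proof -
  have "\<kappa>v * KB \<ge> 0" using \<kappa>v_pos KB by simp
  then have "GB + RB + \<kappa>v * KB + 1 > 0" using GB(2) RB(2) by linarith
  then show ?thesis unfolding MM_def using \<kappa>v_pos by simp
qed

lemma Tm_pos: "Tm > 0"
proof -
  have "min \<kappa>v (1 / (JN ^ 2 * \<alpha> 0)) > 0" using \<kappa>v_pos JN \<alpha>0 by simp
  then show ?thesis unfolding Tm_def using \<sigma>c \<sigma>min_pos MM_pos by simp
qed

lemma trial_lower: assumes Dp: "Dk k > 0" shows "trial k \<ge> Tm"
proof -
  let ?w = "transpose (J (x k)) *v c (x k)"
  define nw where "nw = norm ?w"
  define a where "a = \<alpha> k"
  have a: "a > 0" using alpha_pos[of k] by (simp add: a_def)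
  have a0: "a \<le> \<alpha> 0" using alpha_le0[of k] by (simp add: a_def)
  have wne: "?w \<noteq> 0"
  proof
    assume "?w = 0"
    then have "v k = 0" using step1b[of k] by simp
    then have "Dk k \<le> 0" using D_bound[of k] by simp
    then show False using Dp by simp
  qed
  have nw0: "nw > 0" using wne by (simp add: nw_def)
  have nwK: "nw \<le> KB" using Jc_bound[of k] by (simp add: nw_def)
  have vb: "norm (v k) \<le> \<kappa>v * a * nw" using v_bound[of k] by (simp add: a_def nw_def)
  have "Dk k \<le> (GB + RB) * norm (v k) + norm (v k) ^ 2 / a" using D_bound[of k] by (simp add: a_def)
  also have "\<dots> \<le> (GB + RB) * (\<kappa>v * a * nw) + (\<kappa>v * a * nw) ^ 2 / a"
    using vb GB(2) RB(2) a by (intro add_mono mult_left_mono divide_right_mono power_mono) auto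
  also have "\<dots> = a * nw * (\<kappa>v * (GB + RB + \<kappa>v * nw))"
    using a by (simp add: power2_eq_square field_simps)
  also have "\<dots> \<le> a * nw * MM"
  proof -
    have "\<kappa>v * nw \<le> \<kappa>v * KB" using nwK \<kappa>v_pos by (simp add: mult_left_mono)
    then have "GB + RB + \<kappa>v * nw \<le> GB + RB + \<kappa>v * KB + 1" by linarith
    then have "\<kappa>v * (GB + RB + \<kappa>v * nw) \<le> \<kappa>v * (GB + RB + \<kappa>v * KB + 1)"
      using \<kappa>v_pos by (simp add: mult_left_mono)
    then show ?thesis unfolding MM_def by (rule mult_left_mono) (use a nw0 in auto)
  qed
  finally have Dle: "Dk k \<le> a * nw * MM" .
  have el: "ell k \<ge> bet k * \<sigma>min * nw / 2" using ell_lower[OF wne] by (simp add: nw_def)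
  define mn where "mn = min \<kappa>v (1 / (JN ^ 2 * \<alpha> 0))"
  have mn0: "mn \<ge> 0" using \<kappa>v_pos JN \<alpha>0 by (simp add: mn_def)
  have mnb: "mn * a \<le> bet k"
  proof -
    have "mn * a \<le> \<kappa>v * a" using a by (simp add: mn_def mult_right_mono)
    moreover have "mn * a \<le> 1 / JN ^ 2"
    proof -
      have "mn \<le> 1 / (JN ^ 2 * \<alpha> 0)" by (simp add: mn_def)
      then have "mn * a \<le> (1 / (JN ^ 2 * \<alpha> 0)) * a" using a by (rule mult_right_mono[OF _ less_imp_le])
      also have "\<dots> \<le> (1 / (JN ^ 2 * \<alpha> 0)) * \<alpha> 0" using a0 JN \<alpha>0 by (intro mult_left_mono) auto
      also have "\<dots> = 1 / JN ^ 2" using \<alpha>0 by simp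
      finally show ?thesis .
    qed
    ultimately show ?thesis unfolding bet_def a_def by simp
  qed
  have "Tm * Dk k \<le> Tm * (a * nw * MM)" using Dle Tm_pos by (simp add: mult_left_mono)
  also have "\<dots> = (1 - \<sigma>c) * \<sigma>min * (mn * a) * nw / 2"
    unfolding Tm_def mn_def[symmetric] using MM_pos by (simp add: field_simps)
  also have "\<dots> \<le> (1 - \<sigma>c) * \<sigma>min * bet k * nw / 2"
    using mnb \<sigma>c \<sigma>min_pos nw0 by (intro divide_right_mono mult_right_mono mult_left_mono) auto
  also have "\<dots> \<le> (1 - \<sigma>c) * ell k"
    using el \<sigma>c by (simp add: mult_left_mono mult.assoc mult.left_commute)
  finally have "Tm * Dk k \<le> (1 - \<sigma>c) * ell k" .
  then show ?thesis unfolding trial_def using Dp by (simp add: le_divide_eq)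
qed

definition "tmin = min \<tau>init ((1 - \<epsilon>\<tau>) * Tm)"

lemma tmin_pos: "tmin > 0" unfolding tmin_def using \<tau>init \<epsilon>\<tau> Tm_pos by simp

lemma tau_bounds: "tmin \<le> \<tau> k \<and> \<tau> k \<le> \<tau>init"
proof (induction k)
  case 0
  have tp: "tprev 0 = \<tau>init" by (simp add: tprev_def)
  have "\<tau> 0 \<le> \<tau>init" using tau_le_prev[of 0] tp \<tau>init by simp
  moreover have "\<tau> 0 \<ge> min (tprev 0) ((1 - \<epsilon>\<tau>) * Tm)"
    using tau_step_lower[of 0 Tm] trial_lower tp \<tau>init Tm_pos by simp
  ultimately show ?case unfolding tmin_def tp by simp
next
  case (Suc k)
  have tp: "tprev (Suc k) = \<tau> k" by (simp add: tprev_def)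
  have tk0: "\<tau> k \<ge> 0" using Suc tmin_pos by simp
  have "\<tau> (Suc k) \<le> \<tau> k" using tau_le_prev[of "Suc k"] tp tk0 by simp
  moreover have "\<tau> (Suc k) \<ge> min (tprev (Suc k)) ((1 - \<epsilon>\<tau>) * Tm)"
    using tau_step_lower[of "Suc k" Tm] trial_lower tp tk0 Tm_pos by simp
  ultimately show ?case using Suc unfolding tmin_def tp by (auto simp: min_def split: if_splits)
qed

lemma tau_pos: "\<tau> k > 0" using tau_bounds[of k] tmin_pos by simp

lemma tau_Suc_le: "\<tau> (Suc k) \<le> \<tau> k"
  using tau_le_prev[of "Suc k"] tau_pos[of k] by (simp add: tprev_def)

end

context alg begin

definition "dqk k = dq r c (x k) (g (x k)) (J (x k)) (\<alpha> k) (s k) (\<tau> k)"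

lemma dq_eq: "dqk k = - \<tau> k * Dk k + \<tau> k * \<sigma>u * norm (s k) ^ 2 / \<alpha> k + ell k"
proof -
  define a where "a = \<alpha> k"
  define N where "N = norm (s k) ^ 2"
  have a: "a > 0" using alpha_pos[of k] by (simp add: a_def)
  have h1: "(\<sigma>u + 1/2) * N / a = \<sigma>u * N / a + N / (2 * a)" using a by (simp add: field_simps)
  have e1: "g (x k) \<bullet> s k + norm (s k) ^ 2 / (2 * \<alpha> k) + r (x k + s k) - r (x k) = Dk k - \<sigma>u * N / a"
    using h1 unfolding Dk_def a_def N_def by linarith
  have Js: "J (x k) *v s k = J (x k) *v v k"
    using Ju[of k] by (simp add: s_def matrix_vector_right_distrib)
  have "dqk k = - \<tau> k * (Dk k - \<sigma>u * N / a) + norm (c (x k)) - norm (c (x k) + J (x k) *v v k)"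
    unfolding dqk_def dq_def e1 Js ..
  also have "\<dots> = - \<tau> k * Dk k + \<tau> k * \<sigma>u * N / a + ell k"
    by (simp add: ell_def algebra_simps)
  finally show ?thesis by (simp add: a_def N_def)
qed

lemma dq_lower: "dqk k \<ge> \<tau> k * \<sigma>u * norm (s k) ^ 2 / \<alpha> k + \<sigma>c * ell k"
  using dq_eq[of k] tauD[of k] tau_pos[of k] by (simp add: algebra_simps)

lemma dq_nonneg: "dqk k \<ge> 0"
proof -
  have "\<tau> k * \<sigma>u * norm (s k) ^ 2 / \<alpha> k \<ge> 0" using tau_pos[of k] \<sigma>u alpha_pos[of k] by simp
  moreover have "\<sigma>c * ell k \<ge> 0" using \<sigma>c ell_nonneg[of k] by simp
  ultimately show ?thesis using dq_lower[of k] by linarith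
qed

definition "acc k \<longleftrightarrow> merit f r c (\<tau> k) (x k + s k) \<le> merit f r c (\<tau> k) (x k) - \<eta> * dqk k"

lemma acc_step: "acc k \<Longrightarrow> x (Suc k) = x k + s k \<and> \<alpha> (Suc k) = \<alpha> k"
  using step4'[of k] unfolding acc_def dqk_def by blast

lemma rej_step: "\<not> acc k \<Longrightarrow> x (Suc k) = x k \<and> \<alpha> (Suc k) = \<xi> * \<alpha> k"
  using step4'[of k] unfolding acc_def dqk_def by blast

definition "athr = tmin / (2 * (\<tau>init * LG + NC * LJ + 1))"

lemma Q_pos: "\<tau>init * LG + NC * LJ + 1 > 0"
proof -
  have "\<tau>init * LG \<ge> 0" using \<tau>init LG(2) by simp
  moreover have "NC * LJ \<ge> 0" using NC LJ(2) by simp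
  ultimately show ?thesis by linarith
qed

lemma athr_pos: "athr > 0"
proof -
  have "\<tau>init * LG + NC * LJ + 1 > 0" by (rule Q_pos)
  then show ?thesis unfolding athr_def using tmin_pos by simp
qed

lemma accept: assumes small: "\<alpha> k \<le> athr" shows "acc k"
proof -
  define a where "a = \<alpha> k"
  define t where "t = \<tau> k"
  define N where "N = norm (s k) ^ 2"
  define xk where "xk = x k"
  define sk where "sk = s k"
  have a: "a > 0" using alpha_pos[of k] by (simp add: a_def)
  have t: "t \<ge> tmin" "t \<le> \<tau>init" using tau_bounds[of k] by (auto simp: t_def)
  have N0: "N \<ge> 0" by (simp add: N_def)
  have tf: "f (xk + sk) \<le> f xk + g xk \<bullet> sk + LG * N"
    using taylor_f[OF f_deriv X_convex xX[of k] xsX[of k] LG(1)] by (simp add: xk_def sk_def N_def)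
  have tc: "norm (c (xk + sk) - c xk - J xk *v sk) \<le> NC * LJ * N"
    using taylor_c[OF c_deriv X_convex xX[of k] xsX[of k] LJ(1)] by (simp add: xk_def sk_def N_def NC_def)
  have tc2: "norm (c (xk + sk)) \<le> norm (c xk + J xk *v sk) + NC * LJ * N"
  proof -
    have "norm (c (xk + sk)) \<le> norm (c xk + J xk *v sk) + norm (c (xk + sk) - c xk - J xk *v sk)"
      using norm_triangle_ineq[of "c xk + J xk *v sk" "c (xk + sk) - c xk - J xk *v sk"] by simp
    then show ?thesis using tc by linarith
  qed
  define P where "P = g xk \<bullet> sk + r (xk + sk) - r xk"
  have dqe: "dqk k = - t * P - t * (N / (2 * a)) + norm (c xk) - norm (c xk + J xk *v sk)"
    unfolding dqk_def dq_def P_def t_def a_def N_def xk_def sk_def by (simp add: algebra_simps)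
  have lhs: "merit f r c t (xk + sk) \<le> t * (f xk + r xk) + t * P + t * LG * N + norm (c xk + J xk *v sk) + NC * LJ * N"
  proof -
    have "t * f (xk + sk) \<le> t * (f xk + g xk \<bullet> sk + LG * N)" using tf t tmin_pos by (intro mult_left_mono) auto
    then show ?thesis unfolding merit_def P_def using tc2 by (simp add: algebra_simps)
  qed
  have key: "a * (t * LG + NC * LJ) \<le> t / 2"
  proof -
    have "t * LG \<le> \<tau>init * LG" using t LG(2) by (simp add: mult_right_mono)
    then have "t * LG + NC * LJ \<le> \<tau>init * LG + NC * LJ + 1" by linarith
    moreover have "t * LG + NC * LJ \<ge> 0" using t tmin_pos LG(2) LJ(2) NC by simp
    ultimately have "a * (t * LG + NC * LJ) \<le> athr * (\<tau>init * LG + NC * LJ + 1)"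
      using small a by (intro mult_mono) (auto simp: a_def)
    also have "\<dots> = tmin / 2"
    proof -
      have "\<tau>init * LG + NC * LJ + 1 > 0" by (rule Q_pos)
      have gen: "\<And>q tm :: real. q \<noteq> 0 \<Longrightarrow> tm / (2 * q) * q = tm / 2" by (simp add: field_simps)
      from gen[of "\<tau>init * LG + NC * LJ + 1" tmin] \<open>\<tau>init * LG + NC * LJ + 1 > 0\<close>
      show ?thesis unfolding athr_def by simp
    qed
    also have "\<dots> \<le> t / 2" using t by simp
    finally show ?thesis .
  qed
  have key2: "(t * LG + NC * LJ) * N \<le> t * (N / (2 * a))"
  proof -
    have "(t * LG + NC * LJ) \<le> t / (2 * a)" using key a by (simp add: field_simps)
    then have "(t * LG + NC * LJ) * N \<le> t / (2 * a) * N" using N0 by (rule mult_right_mono)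
    then show ?thesis by simp
  qed
  have "dqk k \<ge> 0" by (rule dq_nonneg)
  then have "\<eta> * dqk k \<le> dqk k" using \<eta> by (simp add: mult_left_le_one_le)
  moreover have key3: "t * LG * N + NC * LJ * N \<le> t * (N / (2 * a))"
    using key2 by (simp add: algebra_simps)
  moreover have mx: "merit f r c t xk = t * (f xk + r xk) + norm (c xk)" by (simp add: merit_def)
  ultimately have "merit f r c t (xk + sk) \<le> merit f r c t xk - \<eta> * dqk k"
    using lhs dqe by linarith
  then show ?thesis unfolding acc_def t_def xk_def sk_def .
qed

definition "amin = min (\<alpha> 0) (\<xi> * athr)"

lemma amin_pos: "amin > 0" unfolding amin_def using \<alpha>0 \<xi> athr_pos by simp

lemma alpha_lower: "\<alpha> k \<ge> amin"
proof (induction k)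
  case 0 then show ?case by (simp add: amin_def)
next
  case (Suc k)
  show ?case
  proof (cases "\<alpha> k \<le> athr")
    case True
    then have "acc k" by (rule accept)
    then show ?thesis using acc_step[of k] Suc by simp
  next
    case False
    have "\<xi> * athr \<le> \<xi> * \<alpha> k" using False \<xi> by simp
    moreover have "\<xi> * \<alpha> k \<le> \<alpha> (Suc k)"
    proof (cases "acc k")
      case True then show ?thesis using acc_step[of k] \<xi> alpha_pos[of k] by simp
    next
      case False then show ?thesis using rej_step[of k] by simp
    qed
    ultimately show ?thesis unfolding amin_def by simp
  qed
qed

lemma eventually_acc: "\<exists>K. \<forall>k\<ge>K. acc k"
proof -
  obtain La where La: "\<alpha> \<longlonglongrightarrow> La" "\<forall>i. La \<le> \<alpha> i"
    using decseq_convergent[OF alpha_dec, of amin] alpha_lower by blast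
  have Lpos: "La \<ge> amin" using La(1) alpha_lower by (intro LIMSEQ_le_const) auto
  have "(\<lambda>k. \<alpha> (Suc k) - \<xi> * \<alpha> k) \<longlonglongrightarrow> La - \<xi> * La"
    by (intro tendsto_diff tendsto_mult_left La(1) LIMSEQ_Suc)
  moreover have "La - \<xi> * La > 0" using Lpos amin_pos \<xi> by (simp add: algebra_simps)
  ultimately have "eventually (\<lambda>k. \<alpha> (Suc k) - \<xi> * \<alpha> k > 0) sequentially"
    by (rule order_tendstoD(1))
  then obtain K where K: "\<And>k. k \<ge> K \<Longrightarrow> \<alpha> (Suc k) - \<xi> * \<alpha> k > 0"
    unfolding eventually_sequentially by blast
  have "acc k" if "k \<ge> K" for k
  proof (rule ccontr)
    assume "\<not> acc k"
    then have "\<alpha> (Suc k) = \<xi> * \<alpha> k" using rej_step by blast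
    then show False using K[OF that] by simp
  qed
  then show ?thesis by blast
qed

end

context alg begin

definition "psi k = \<tau> k * (f (x k) + r (x k) - flow) + norm (c (x k))"

lemma F_nonneg: "f (x k) + r (x k) - flow \<ge> 0"
  using flow[OF xX[of k]] r_nonneg[of "x k"] by simp

lemma psi_nonneg: "psi k \<ge> 0"
  unfolding psi_def using tau_pos[of k] F_nonneg[of k] by simp

lemma psi_Suc_le: "psi (Suc k) \<le> psi k"
proof (cases "acc k")
  case True
  have "psi (Suc k) \<le> \<tau> k * (f (x (Suc k)) + r (x (Suc k)) - flow) + norm (c (x (Suc k)))"
    unfolding psi_def using tau_Suc_le[of k] F_nonneg[of "Suc k"] by (simp add: mult_right_mono)
  also have "\<dots> = merit f r c (\<tau> k) (x k + s k) - \<tau> k * flow"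
    using acc_step[OF True] by (simp add: merit_def algebra_simps)
  also have "\<dots> \<le> merit f r c (\<tau> k) (x k) - \<eta> * dqk k - \<tau> k * flow"
    using True unfolding acc_def by simp
  also have "\<dots> = psi k - \<eta> * dqk k" by (simp add: merit_def psi_def algebra_simps)
  also have "\<dots> \<le> psi k" using \<eta> dq_nonneg[of k] by simp
  finally show ?thesis .
next
  case False
  then have xe: "x (Suc k) = x k" using rej_step by blast
  show ?thesis
    unfolding psi_def xe using tau_Suc_le[of k] F_nonneg[of k] by (simp add: mult_right_mono)
qed

lemma psi_acc: "acc k \<Longrightarrow> psi (Suc k) \<le> psi k - \<eta> * dqk k"
proof -
  assume acc: "acc k"
  have "psi (Suc k) \<le> \<tau> k * (f (x (Suc k)) + r (x (Suc k)) - flow) + norm (c (x (Suc k)))"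
    unfolding psi_def using tau_Suc_le[of k] F_nonneg[of "Suc k"] by (simp add: mult_right_mono)
  also have "\<dots> = merit f r c (\<tau> k) (x k + s k) - \<tau> k * flow"
    using acc_step[OF acc] by (simp add: merit_def algebra_simps)
  also have "\<dots> \<le> merit f r c (\<tau> k) (x k) - \<eta> * dqk k - \<tau> k * flow"
    using acc unfolding acc_def by simp
  also have "\<dots> = psi k - \<eta> * dqk k" by (simp add: merit_def psi_def algebra_simps)
  finally show ?thesis .
qed

lemma sandwich0:
  fixes a b :: "nat \<Rightarrow> real"
  assumes "\<And>k. 0 \<le> a k" "eventually (\<lambda>k. a k \<le> b k) sequentially" "b \<longlonglongrightarrow> 0"
  shows "a \<longlonglongrightarrow> 0"
proof (rule tendsto_sandwich[of "\<lambda>_. 0" a sequentially b 0])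
  show "eventually (\<lambda>k. 0 \<le> a k) sequentially" using assms(1) by simp
qed (use assms in auto)

lemma dq_lim: "dqk \<longlonglongrightarrow> 0"
proof -
  have dec: "decseq psi" using psi_Suc_le by (rule decseq_SucI)
  obtain Lp where Lp: "psi \<longlonglongrightarrow> Lp" using decseq_convergent[OF dec, of 0] psi_nonneg by blast
  have L2: "(\<lambda>k. psi (Suc k)) \<longlonglongrightarrow> Lp" using LIMSEQ_Suc[OF Lp] .
  have "(\<lambda>k. (psi k - psi (Suc k)) / \<eta>) \<longlonglongrightarrow> (Lp - Lp) / \<eta>"
    using tendsto_divide[OF tendsto_diff[OF Lp L2] tendsto_const[of \<eta>]] \<eta> by simp
  then have dpsi: "(\<lambda>k. (psi k - psi (Suc k)) / \<eta>) \<longlonglongrightarrow> 0" by simp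
  obtain K where K: "\<And>k. k \<ge> K \<Longrightarrow> acc k" using eventually_acc by blast
  have ev: "eventually (\<lambda>k. dqk k \<le> (psi k - psi (Suc k)) / \<eta>) sequentially"
    unfolding eventually_sequentially
  proof (intro exI allI impI)
    fix k assume "K \<le> k"
    then have "psi (Suc k) \<le> psi k - \<eta> * dqk k" using psi_acc K by blast
    then have "\<eta> * dqk k \<le> psi k - psi (Suc k)" by simp
    then show "dqk k \<le> (psi k - psi (Suc k)) / \<eta>" using \<eta> by (simp add: le_divide_eq mult.commute)
  qed
  show ?thesis by (rule sandwich0[OF dq_nonneg ev dpsi])
qed

lemma s_lim: "s \<longlonglongrightarrow> 0"
proof -
  define C where "C = \<alpha> 0 / (tmin * \<sigma>u)"
  have C0: "C > 0" unfolding C_def using \<alpha>0 tmin_pos \<sigma>u by simp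
  have b: "norm (s k) ^ 2 \<le> C * dqk k" for k
  proof -
    have "tmin * \<sigma>u * norm (s k) ^ 2 / \<alpha> 0 \<le> \<tau> k * \<sigma>u * norm (s k) ^ 2 / \<alpha> k"
    proof -
      have "tmin * \<sigma>u * norm (s k) ^ 2 \<le> \<tau> k * \<sigma>u * norm (s k) ^ 2"
        using tau_bounds[of k] \<sigma>u by (intro mult_right_mono) auto
      moreover have "\<tau> k * \<sigma>u * norm (s k) ^ 2 / \<alpha> 0 \<le> \<tau> k * \<sigma>u * norm (s k) ^ 2 / \<alpha> k"
        using alpha_le0[of k] alpha_pos[of k] tau_pos[of k] \<sigma>u
        by (intro divide_left_mono) auto
      ultimately show ?thesis using \<alpha>0 by (meson divide_right_mono less_imp_le order_trans)
    qed
    also have "\<dots> \<le> dqk k"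
    proof -
      have "\<sigma>c * ell k \<ge> 0" using \<sigma>c ell_nonneg[of k] by simp
      then show ?thesis using dq_lower[of k] by linarith
    qed
    finally have "tmin * \<sigma>u * norm (s k) ^ 2 / \<alpha> 0 \<le> dqk k" .
    then show ?thesis unfolding C_def using \<alpha>0 tmin_pos \<sigma>u by (simp add: field_simps)
  qed
  have "(\<lambda>k. C * dqk k) \<longlonglongrightarrow> C * 0" by (rule tendsto_mult_left[OF dq_lim])
  then have l2: "(\<lambda>k. C * dqk k) \<longlonglongrightarrow> 0" by simp
  have sq: "(\<lambda>k. norm (s k) ^ 2) \<longlonglongrightarrow> 0"
    by (rule sandwich0[OF _ _ l2]) (use b in auto)
  have "(\<lambda>k. sqrt (norm (s k) ^ 2)) \<longlonglongrightarrow> sqrt 0" by (intro tendsto_real_sqrt sq)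
  then have "(\<lambda>k. norm (s k)) \<longlonglongrightarrow> 0" by simp
  then show ?thesis by (simp add: tendsto_norm_zero_iff)
qed

lemma u_lim: "u \<longlonglongrightarrow> 0"
proof -
  have "norm (u k) \<le> norm (s k)" for k
  proof -
    have "norm (u k) ^ 2 \<le> norm (s k) ^ 2" using norm_s[of k] by simp
    then show ?thesis by (rule power2_le_imp_le) simp
  qed
  moreover have "(\<lambda>k. norm (s k)) \<longlonglongrightarrow> 0" using s_lim by (simp add: tendsto_norm_zero_iff)
  ultimately have "(\<lambda>k. norm (u k)) \<longlonglongrightarrow> 0"
    by (intro sandwich0[of "\<lambda>k. norm (u k)" "\<lambda>k. norm (s k)"]) auto
  then show ?thesis by (simp add: tendsto_norm_zero_iff)
qed

lemma ell_lim: "ell \<longlonglongrightarrow> 0"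
proof -
  have "ell k \<le> dqk k / \<sigma>c" for k
  proof -
    have "\<tau> k * \<sigma>u * norm (s k) ^ 2 / \<alpha> k \<ge> 0" using tau_pos[of k] \<sigma>u alpha_pos[of k] by simp
    then have "\<sigma>c * ell k \<le> dqk k" using dq_lower[of k] by linarith
    then show ?thesis using \<sigma>c by (simp add: le_divide_eq mult.commute)
  qed
  moreover have "(\<lambda>k. dqk k / \<sigma>c) \<longlonglongrightarrow> 0 / \<sigma>c"
    using tendsto_divide[OF dq_lim tendsto_const[of \<sigma>c]] \<sigma>c by simp
  then have "(\<lambda>k. dqk k / \<sigma>c) \<longlonglongrightarrow> 0" by simp
  ultimately show ?thesis
    by (intro sandwich0[of ell "\<lambda>k. dqk k / \<sigma>c"]) (use ell_nonneg in auto)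
qed

definition "bmin = min (\<kappa>v * amin) (1 / JN ^ 2)"

lemma c_lim: "(\<lambda>k. norm (c (x k))) \<longlonglongrightarrow> 0"
proof -
  have bm: "bmin > 0" unfolding bmin_def using \<kappa>v_pos amin_pos JN by simp
  define C where "C = 2 / (bmin * \<sigma>min ^ 2)"
  have b: "norm (c (x k)) \<le> C * ell k" for k
  proof (cases "transpose (J (x k)) *v c (x k) = 0")
    case True
    then have "c (x k) = 0" using step1b by blast
    then show ?thesis using ell_nonneg[of k] unfolding C_def using bm \<sigma>min_pos by simp
  next
    case False
    have "\<kappa>v * amin \<le> \<kappa>v * \<alpha> k" using alpha_lower[of k] \<kappa>v_pos by simp
    then have "bmin \<le> bet k" unfolding bmin_def bet_def by (rule min.mono) simp
    have "bmin * \<sigma>min * (\<sigma>min * norm (c (x k))) / 2 \<le> bet k * \<sigma>min * norm (transpose (J (x k)) *v c (x k)) / 2"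
      using \<open>bmin \<le> bet k\<close> sig[of "c (x k)" k] bm \<sigma>min_pos
      by (intro divide_right_mono mult_mono) auto
    also have "\<dots> \<le> ell k" by (rule ell_lower[OF False])
    finally have "bmin * \<sigma>min ^ 2 * norm (c (x k)) / 2 \<le> ell k" by (simp add: power2_eq_square mult.assoc)
    then show ?thesis unfolding C_def using bm \<sigma>min_pos by (simp add: field_simps)
  qed
  have "(\<lambda>k. C * ell k) \<longlonglongrightarrow> C * 0" by (rule tendsto_mult_left[OF ell_lim])
  then have l2: "(\<lambda>k. C * ell k) \<longlonglongrightarrow> 0" by simp
  show ?thesis by (rule sandwich0[OF _ _ l2]) (use b in auto)
qed

end

lemma sandwich0g:
  fixes a b :: "nat \<Rightarrow> real"
  assumes "\<And>k. 0 \<le> a k" "eventually (\<lambda>k. a k \<le> b k) sequentially" "b \<longlonglongrightarrow> 0"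
  shows "a \<longlonglongrightarrow> 0"
proof (rule tendsto_sandwich[of "\<lambda>_. 0" a sequentially b 0])
  show "eventually (\<lambda>k. 0 \<le> a k) sequentially" using assms(1) by simp
qed (use assms in auto)

lemma transpose_diff_mat: "transpose (A - B) = transpose A - transpose (B :: real^'n^'m)"
  by (simp add: transpose_def vec_eq_iff)

lemma tendsto_transpose_mv:
  fixes A :: "nat \<Rightarrow> real^'n^'m" and y :: "nat \<Rightarrow> real^'m"
  assumes A: "A \<longlonglongrightarrow> A0" and y: "y \<longlonglongrightarrow> y0"
  shows "(\<lambda>j. transpose (A j) *v y j) \<longlonglongrightarrow> transpose A0 *v y0"
proof -
  define N where "N = real CARD('m) * real CARD('n)"
  obtain YB where YB: "YB > 0" "\<forall>j. norm (y j) \<le> YB"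
    using convergent_imp_Bseq[OF convergentI[OF y]] by (rule BseqE) blast
  have eq: "transpose (A j) *v y j - transpose A0 *v y0
      = transpose (A j - A0) *v y j + transpose A0 *v (y j - y0)" for j
    by (simp add: transpose_diff_mat matrix_vector_mult_diff_rdistrib matrix_vector_right_distrib
        matrix_vector_mult_diff_distrib del: transpose_matrix_vector)
  have bnd: "norm (transpose (A j) *v y j - transpose A0 *v y0)
      \<le> N * YB * norm (A j - A0) + N * norm A0 * norm (y j - y0)" for j
  proof -
    have "norm (transpose (A j) *v y j - transpose A0 *v y0)
        \<le> norm (transpose (A j - A0) *v y j) + norm (transpose A0 *v (y j - y0))"
      unfolding eq by (rule norm_triangle_ineq)
    also have "\<dots> \<le> N * norm (A j - A0) * norm (y j) + N * norm A0 * norm (y j - y0)"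
      unfolding N_def by (intro add_mono matvec_boundT)
    also have "\<dots> \<le> N * YB * norm (A j - A0) + N * norm A0 * norm (y j - y0)"
    proof -
      have "N \<ge> 0" by (simp add: N_def)
      then have "N * norm (A j - A0) * norm (y j) \<le> N * norm (A j - A0) * YB"
        using YB by (intro mult_left_mono) auto
      then show ?thesis by (simp add: algebra_simps)
    qed
    finally show ?thesis .
  qed
  have a0: "(\<lambda>j. norm (A j - A0)) \<longlonglongrightarrow> 0" using LIM_zero[OF A] by (simp add: tendsto_norm_zero_iff)
  have y0: "(\<lambda>j. norm (y j - y0)) \<longlonglongrightarrow> 0" using LIM_zero[OF y] by (simp add: tendsto_norm_zero_iff)
  have "(\<lambda>j. N * YB * norm (A j - A0) + N * norm A0 * norm (y j - y0)) \<longlonglongrightarrow> N * YB * 0 + N * norm A0 * 0"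
    by (intro tendsto_add tendsto_mult_left a0 y0)
  then have b0: "(\<lambda>j. N * YB * norm (A j - A0) + N * norm A0 * norm (y j - y0)) \<longlonglongrightarrow> 0" by simp
  have "(\<lambda>j. norm (transpose (A j) *v y j - transpose A0 *v y0)) \<longlonglongrightarrow> 0"
    by (rule sandwich0g[OF _ _ b0]) (use bnd in auto)
  then show ?thesis by (simp add: tendsto_norm_zero_iff LIM_zero_iff del: transpose_matrix_vector)
qed

context alg begin

lemma final: "c xstar = 0 \<and>
         (\<exists>ystar :: real^'m. \<exists>grstar \<in> subdiff r xstar.
            g xstar + grstar - transpose (J xstar) *v ystar = 0)"
proof -
  obtain h where h: "strict_mono h" "(x \<circ> h) \<longlonglongrightarrow> xstar" using limpt by blast
  have "\<forall>k. \<exists>y gr. gr \<in> subdiff r (x k + s k) \<and> g (x k) + (1 / \<alpha> k) *\<^sub>R u k + gr = transpose (J (x k)) *v y"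
    using kkt_k by blast
  then obtain Y GR where YG: "\<And>k. GR k \<in> subdiff r (x k + s k)"
    "\<And>k. g (x k) + (1 / \<alpha> k) *\<^sub>R u k + GR k = transpose (J (x k)) *v Y k"
    by metis
  obtain UB where UB: "UB > 0" "\<forall>k. norm (u k) \<le> UB"
    using convergent_imp_Bseq[OF convergentI[OF u_lim]] by (rule BseqE) blast
  have GRb: "norm (GR k) \<le> RB" for k using RB(1)[OF xsX YG(1)] .
  define YB where "YB = (GB + UB / amin + RB) / \<sigma>min"
  have Yb: "norm (Y k) \<le> YB" for k
  proof -
    have "norm ((1 / \<alpha> k) *\<^sub>R u k) \<le> UB / amin"
    proof -
      have "norm ((1 / \<alpha> k) *\<^sub>R u k) = norm (u k) / \<alpha> k" using alpha_pos[of k] by simp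
      also have "\<dots> \<le> UB / \<alpha> k" using UB alpha_pos[of k] by (simp add: divide_right_mono)
      also have "\<dots> \<le> UB / amin" using UB alpha_lower[of k] amin_pos by (intro divide_left_mono) auto
      finally show ?thesis .
    qed
    then have "norm (g (x k) + (1 / \<alpha> k) *\<^sub>R u k + GR k) \<le> GB + UB / amin + RB"
      using GB(1)[OF xX[of k]] GRb[of k] norm_triangle_ineq[of "g (x k) + (1 / \<alpha> k) *\<^sub>R u k" "GR k"]
        norm_triangle_ineq[of "g (x k)" "(1 / \<alpha> k) *\<^sub>R u k"] by linarith
    then have "\<sigma>min * norm (Y k) \<le> GB + UB / amin + RB" using sig[of "Y k" k] YG(2)[of k] by simp
    then show ?thesis unfolding YB_def using \<sigma>min_pos by (simp add: le_divide_eq mult.commute)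
  qed
  define z where "z j = (GR (h j), Y (h j))" for j
  have "bounded (range z)"
  proof -
    have "range z \<subseteq> cball 0 RB \<times> cball 0 YB" using GRb Yb by (auto simp: z_def)
    moreover have "bounded (cball (0::real^'n) RB \<times> cball (0::real^'m) YB)"
      by (intro bounded_Times bounded_cball)
    ultimately show ?thesis by (rule bounded_subset[rotated])
  qed
  then obtain l \<phi> where \<phi>: "strict_mono \<phi>" "(z \<circ> \<phi>) \<longlonglongrightarrow> l"
    using bounded_imp_convergent_subsequence by blast
  define H where "H = h \<circ> \<phi>"
  have Hm: "strict_mono H" unfolding H_def by (rule strict_mono_o[OF h(1) \<phi>(1)])
  have xH: "(\<lambda>j. x (H j)) \<longlonglongrightarrow> xstar"
    using LIMSEQ_subseq_LIMSEQ[OF h(2) \<phi>(1)] by (simp add: H_def comp_def)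
  have sH: "(\<lambda>j. s (H j)) \<longlonglongrightarrow> 0" using LIMSEQ_subseq_LIMSEQ[OF s_lim Hm] by (simp add: comp_def)
  have uH: "(\<lambda>j. u (H j)) \<longlonglongrightarrow> 0" using LIMSEQ_subseq_LIMSEQ[OF u_lim Hm] by (simp add: comp_def)
  have cH: "(\<lambda>j. norm (c (x (H j)))) \<longlonglongrightarrow> 0" using LIMSEQ_subseq_LIMSEQ[OF c_lim Hm] by (simp add: comp_def)
  have GRH: "(\<lambda>j. GR (H j)) \<longlonglongrightarrow> fst l"
    using tendsto_fst[OF \<phi>(2)] by (simp add: z_def H_def comp_def)
  have YH: "(\<lambda>j. Y (H j)) \<longlonglongrightarrow> snd l"
    using tendsto_snd[OF \<phi>(2)] by (simp add: z_def H_def comp_def)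
  have gc: "isCont g xstar" using g_cont by (simp add: continuous_on_eq_continuous_at)
  have Jc: "isCont J xstar" using J_cont by (simp add: continuous_on_eq_continuous_at)
  have cc: "isCont c xstar" using has_derivative_continuous[OF c_deriv[of xstar]] .
  have rc: "isCont r xstar"
    using convex_on_continuous[OF open_UNIV r_convex] by (simp add: continuous_on_eq_continuous_at)
  have "(\<lambda>j. norm (c (x (H j)))) \<longlonglongrightarrow> norm (c xstar)"
    by (intro tendsto_norm isCont_tendsto_compose[OF cc xH])
  then have "norm (c xstar) = 0" using LIMSEQ_unique cH by blast
  then have c0: "c xstar = 0" by simp
  have au: "(\<lambda>j. (1 / \<alpha> (H j)) *\<^sub>R u (H j)) \<longlonglongrightarrow> 0"
  proof -
    have "(\<lambda>j. norm (u (H j)) / amin) \<longlonglongrightarrow> 0 / amin"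
      using tendsto_divide[OF iffD2[OF tendsto_norm_zero_iff uH] tendsto_const[of amin]] amin_pos by simp
    then have b0: "(\<lambda>j. norm (u (H j)) / amin) \<longlonglongrightarrow> 0" by simp
    have "norm ((1 / \<alpha> (H j)) *\<^sub>R u (H j)) \<le> norm (u (H j)) / amin" for j
    proof -
      have "norm ((1 / \<alpha> (H j)) *\<^sub>R u (H j)) = norm (u (H j)) / \<alpha> (H j)" using alpha_pos[of "H j"] by simp
      also have "\<dots> \<le> norm (u (H j)) / amin" using alpha_lower[of "H j"] amin_pos by (intro divide_left_mono) auto
      finally show ?thesis .
    qed
    then have "(\<lambda>j. norm ((1 / \<alpha> (H j)) *\<^sub>R u (H j))) \<longlonglongrightarrow> 0"
      by (intro sandwich0g[OF _ _ b0]) auto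
    then show ?thesis by (rule iffD1[OF tendsto_norm_zero_iff])
  qed
  have "(\<lambda>j. g (x (H j)) + (1 / \<alpha> (H j)) *\<^sub>R u (H j) + GR (H j) - transpose (J (x (H j))) *v Y (H j))
      \<longlonglongrightarrow> g xstar + 0 + fst l - transpose (J xstar) *v snd l"
    by (intro tendsto_diff tendsto_add isCont_tendsto_compose[OF gc xH] au GRH
        tendsto_transpose_mv[OF isCont_tendsto_compose[OF Jc xH] YH])
  moreover have "(\<lambda>j. g (x (H j)) + (1 / \<alpha> (H j)) *\<^sub>R u (H j) + GR (H j) - transpose (J (x (H j))) *v Y (H j)) = (\<lambda>j. 0)"
    using YG(2) by (simp del: transpose_matrix_vector)
  ultimately have L0: "(\<lambda>j. (0::real^'n)) \<longlonglongrightarrow> g xstar + 0 + fst l - transpose (J xstar) *v snd l"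
    by (simp only:)
  have "0 = g xstar + 0 + fst l - transpose (J xstar) *v snd l"
    using LIMSEQ_unique[OF tendsto_const L0] .
  then have eq0: "g xstar + fst l - transpose (J xstar) *v snd l = 0" by simp
  have sub: "fst l \<in> subdiff r xstar"
    unfolding subdiff_def
  proof (intro CollectI allI)
    fix yy
    have xs: "(\<lambda>j. x (H j) + s (H j)) \<longlonglongrightarrow> xstar" using tendsto_add[OF xH sH] by simp
    have lim: "(\<lambda>j. r (x (H j) + s (H j)) + GR (H j) \<bullet> (yy - (x (H j) + s (H j))))
        \<longlonglongrightarrow> r xstar + fst l \<bullet> (yy - xstar)"
      by (intro tendsto_add tendsto_inner tendsto_diff tendsto_const isCont_tendsto_compose[OF rc xs] GRH xs)
    have "\<forall>j. r (x (H j) + s (H j)) + GR (H j) \<bullet> (yy - (x (H j) + s (H j))) \<le> r yy"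
      using YG(1) unfolding subdiff_def by blast
    then show "r xstar + fst l \<bullet> (yy - xstar) \<le> r yy"
      by (intro LIMSEQ_le_const2[OF lim]) auto
  qed
  show ?thesis using c0 eq0 sub by blast
qed

end

theorem theorem3p18:
  fixes f :: "real^'n \<Rightarrow> real" and g :: "real^'n \<Rightarrow> real^'n"
    and c :: "real^'n \<Rightarrow> real^'m" and J :: "real^'n \<Rightarrow> real^'n^'m"
    and r :: "real^'n \<Rightarrow> real"
    and \<kappa>v \<sigma>c \<epsilon>\<tau> \<xi> \<eta> \<sigma>u \<tau>init \<sigma>min :: real
    and x v u s :: "nat \<Rightarrow> real^'n" and \<alpha> \<tau> :: "nat \<Rightarrow> real"
    and X :: "(real^'n) set" and xstar :: "real^'n"
  assumes dims: "CARD('m) \<le> CARD('n)"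
    and f_deriv: "\<And>z. (f has_derivative (\<lambda>h. g z \<bullet> h)) (at z)"
    and g_cont: "continuous_on UNIV g"
    and c_deriv: "\<And>z. (c has_derivative (\<lambda>h. J z *v h)) (at z)"
    and J_cont: "continuous_on UNIV J"
    and r_convex: "convex_on UNIV r"
    and r_nonneg: "\<And>z. r z \<ge> 0"
    and \<kappa>v_pos: "\<kappa>v > 0"
    and \<sigma>c: "0 < \<sigma>c" "\<sigma>c < 1"
    and \<epsilon>\<tau>: "0 < \<epsilon>\<tau>" "\<epsilon>\<tau> < 1"
    and \<xi>: "0 < \<xi>" "\<xi> < 1"
    and \<eta>: "0 < \<eta>" "\<eta> < 1"
    and \<sigma>u: "0 < \<sigma>u" "\<sigma>u \<le> 1/2"
    and \<alpha>0: "\<alpha> 0 > 0"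
    and \<tau>init: "\<tau>init > 0"
    and step1a: "\<And>k. transpose (J (x k)) *v c (x k) \<noteq> 0 \<Longrightarrow>
        (\<exists>w. v k = transpose (J (x k)) *v w)
      \<and> norm (v k) \<le> \<kappa>v * \<alpha> k * norm (transpose (J (x k)) *v c (x k))
      \<and> (\<exists>\<beta>c. 0 \<le> \<beta>c \<and> \<beta>c \<le> \<kappa>v * \<alpha> k
           \<and> (\<forall>\<beta>. 0 \<le> \<beta> \<and> \<beta> \<le> \<kappa>v * \<alpha> k \<longrightarrow>
                 (1/2) * norm (c (x k) - \<beta>c *\<^sub>R (J (x k) *v (transpose (J (x k)) *v c (x k)))) ^ 2
               \<le> (1/2) * norm (c (x k) - \<beta> *\<^sub>R (J (x k) *v (transpose (J (x k)) *v c (x k)))) ^ 2)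
           \<and> norm (c (x k) + J (x k) *v v k)
             \<le> norm (c (x k) + J (x k) *v (- \<beta>c *\<^sub>R (transpose (J (x k)) *v c (x k)))))"
    and step1b: "\<And>k. transpose (J (x k)) *v c (x k) = 0 \<Longrightarrow> v k = 0 \<and> c (x k) = 0"
    and step2: "\<And>k. J (x k) *v u k = 0
      \<and> (\<forall>w. J (x k) *v w = 0 \<longrightarrow>
            g (x k) \<bullet> u k + norm (u k) ^ 2 / (2 * \<alpha> k) + r (x k + v k + u k)
          \<le> g (x k) \<bullet> w + norm w ^ 2 / (2 * \<alpha> k) + r (x k + v k + w))"
    and s_def: "\<And>k. s k = v k + u k"
    and s_nz: "\<And>k. s k \<noteq> 0"
    and step3: "\<And>k. (let \<tau>prev = (if k = 0 then \<tau>init else \<tau> (k - 1));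
                        D = g (x k) \<bullet> s k + (\<sigma>u + 1/2) * norm (s k) ^ 2 / \<alpha> k
                            + r (x k + s k) - r (x k);
                        t = (1 - \<sigma>c) * (norm (c (x k)) - norm (c (x k) + J (x k) *v v k)) / D
                    in \<tau> k = (if D \<le> 0 \<or> \<tau>prev \<le> t then \<tau>prev
                              else min ((1 - \<epsilon>\<tau>) * \<tau>prev) t))"
    and step4: "\<And>k. (if merit f r c (\<tau> k) (x k + s k)
                           \<le> merit f r c (\<tau> k) (x k) - \<eta> * dq r c (x k) (g (x k)) (J (x k)) (\<alpha> k) (s k) (\<tau> k)
                      then x (Suc k) = x k + s k \<and> \<alpha> (Suc k) = \<alpha> k
                      else x (Suc k) = x k \<and> \<alpha> (Suc k) = \<xi> * \<alpha> k)"
    and X_open: "open X" and X_convex: "convex X"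
    and X_iter: "\<And>k. x k \<in> X \<and> x k + s k \<in> X"
    and f_bdd: "bdd_below (f ` X)"
    and g_bdd: "\<exists>B. \<forall>z\<in>X. norm (g z) \<le> B"
    and g_lip: "\<exists>L. \<forall>y\<in>X. \<forall>z\<in>X. norm (g y - g z) \<le> L * norm (y - z)"
    and c_bdd: "\<exists>B. \<forall>z\<in>X. norm (c z) \<le> B"
    and J_bdd: "\<exists>B. \<forall>z\<in>X. norm (J z) \<le> B"
    and J_lip: "\<exists>L. \<forall>y\<in>X. \<forall>z\<in>X. norm (J y - J z) \<le> L * norm (y - z)"
    and subgrad_bdd: "\<exists>B. \<forall>z\<in>X. \<forall>gr\<in>subdiff r z. norm gr \<le> B"
    and \<sigma>min_pos: "\<sigma>min > 0"
    and \<sigma>min_bd: "\<And>k. sigma_min_sv (J (x k)) \<ge> \<sigma>min"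
    and limpt: "\<exists>h. strict_mono h \<and> (x \<circ> h) \<longlonglongrightarrow> xstar"
  shows "c xstar = 0 \<and>
         (\<exists>ystar :: real^'m. \<exists>grstar \<in> subdiff r xstar.
            g xstar + grstar - transpose (J xstar) *v ystar = 0)"
proof -
  interpret alg f g c J r \<kappa>v \<sigma>c \<epsilon>\<tau> \<xi> \<eta> \<sigma>u \<tau>init \<sigma>min x v u s \<alpha> \<tau> X xstar
    by (unfold_locales) (fact assms)+
  show ?thesis by (rule final)
qed

end
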